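(* Consider $\Gamma_T(p,q)$, let $\sigma^*_{p,q}$, $\tau^*_{p,q}$ be security strategies of players 1 and 2, and $x^*_{p,q}$, $y^*_{p,q}$ their realization plans. Then $\mu^*\in\mathbb R^{|K|}$ with $\mu^{*k}=-w_{k,0}(y^*_{p,q})$ for all $k\in K$ is an optimal solution of $\min_{\mu\in\mathbb R^{|K|}}\{\tilde V^1_T(\mu,q)-p^T\mu\}$, and $\nu^*\in\mathbb R^{|L|}$ with $\nu^{*l}=-u_{l,0}(x^*_{p,q})$ for all $l\in L$ is an optimal solution of $\max_{\nu\in\mathbb R^{|L|}}\{\tilde V^2_T(p,\nu)-q^T\nu\}$.
   Context: Setting: nonempty finite type sets $K,L$, action sets $A,B$, payoff $M:K\times L\times A\times B\to\mathbb R$, $p\in\Delta(K),q\in\Delta(L)$ with positive entries. In $\Gamma_T(p,q)$, $k\sim p$, $l\sim q$ are drawn independently and told privately to players 1 and 2; for $T$ stages both choose actions simultaneously, publicly announced; behavior strategies depend on own type and both action histories; payoff $\gamma_T=\mathbb E[\sum_{t=1}^TM(k,l,a_t,b_t)]$ to player 1 (maximizer); value $V_T(p,q)$; security strategies attain $\max_\sigma\min_\tau\gamma_T$ (player 1) resp. $\min_\tau\max_\sigma\gamma_T$ (player 2). The realization plan of $\sigma$ is $x^{a_t}_{k,h^A_t,h^B_t}=p^k\prod_{s=1}^t\sigma^{a_s}_s(k,h^A_s,h^B_s)$ (similarly for $\tau$ with $q$). For $x$ the realization plan of $\sigma$: $u_{l,0}(x)=\min_{\tau(l)}\sum_kp^k\mathbb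 E_{\sigma,\tau(l)}[\sum_{s=1}^TM(k,l,a_s,b_s)\mid k,l]$ (minimum over strategies of player 2 of type $l$); for $y$ the realization plan of $\tau$: $w_{k,0}(y)=\max_{\sigma(k)}\sum_lq^l\mathbb E_{\sigma(k),\tau}[\sum_{s=1}^TM\mid k,l]$. Dual games: in $\tilde\Gamma^1_T(\mu,q)$ ($\mu\in\mathbb R^{|K|}$) player 1 chooses his own type $k$ (by a distribution of his choice, hidden from player 2), nature draws $l\sim q$ and tells player 2, $T$ stages are played, payoff to player 1 $\mathbb E[\mu^k+\sum_{t=1}^TM(k,l,a_t,b_t)]$, value $\tilde V^1_T(\mu,q)$. In $\tilde\Gamma^2_T(p,\nu)$ ($\nu\in\mathbb R^{|L|}$) nature draws $k\sim p$ and tells player 1, player 2 chooses $l$ himself, payoff $\mathbb E[\nu^l+\sum_{t=1}^TM]$, value $\tilde V^2_T(p,\nu)$. *)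

theory Defs
  imports Complex_Main
begin

definition distr :: "('x::finite \<Rightarrow> real) \<Rightarrow> bool" where
  "distr d \<longleftrightarrow> (\<forall>x. 0 \<le> d x) \<and> sum d UNIV = 1"

text \<open>A strategy of player 1 maps his type k and the
  action histories (of player 1 and player 2, listed in stage order) to a
  mixed action on A; the current stage is the history length plus one.\<close>
definition strat1 :: "('k \<Rightarrow> 'a list \<Rightarrow> 'b list \<Rightarrow> 'a::finite \<Rightarrow> real) set" where
  "strat1 = {\<sigma>. \<forall>k ha hb. distr (\<sigma> k ha hb)}"

definition strat2 :: "('l \<Rightarrow> 'a list \<Rightarrow> 'b list \<Rightarrow> 'b::finite \<Rightarrow> real) set" where
  "strat2 = {\<tau>. \<forall>l ha hb. distr (\<tau> l ha hb)}"

fun payoff_from :: "nat \<Rightarrow> ('k \<Rightarrow> 'l \<Rightarrow> 'a::finite \<Rightarrow> 'b::finite \<Rightarrow> real)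
    \<Rightarrow> ('k \<Rightarrow> 'a list \<Rightarrow> 'b list \<Rightarrow> 'a \<Rightarrow> real)
    \<Rightarrow> ('l \<Rightarrow> 'a list \<Rightarrow> 'b list \<Rightarrow> 'b \<Rightarrow> real)
    \<Rightarrow> 'k \<Rightarrow> 'l \<Rightarrow> 'a list \<Rightarrow> 'b list \<Rightarrow> real" where
  "payoff_from 0 M \<sigma> \<tau> k l ha hb = 0"
| "payoff_from (Suc n) M \<sigma> \<tau> k l ha hb =
     (\<Sum>a\<in>UNIV. \<Sum>b\<in>UNIV. \<sigma> k ha hb a * \<tau> l ha hb b *
        (M k l a b + payoff_from n M \<sigma> \<tau> k l (ha @ [a]) (hb @ [b])))"

text \<open>E_{sigma,tau}[sum_{t=1}^T M(k,l,a_t,b_t) | k, l].\<close>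
definition cond_payoff where
  "cond_payoff T M \<sigma> \<tau> k l = payoff_from T M \<sigma> \<tau> k l [] []"

definition gamma :: "nat \<Rightarrow> ('k::finite \<Rightarrow> 'l::finite \<Rightarrow> 'a::finite \<Rightarrow> 'b::finite \<Rightarrow> real)
    \<Rightarrow> ('k \<Rightarrow> real) \<Rightarrow> ('l \<Rightarrow> real)
    \<Rightarrow> ('k \<Rightarrow> 'a list \<Rightarrow> 'b list \<Rightarrow> 'a \<Rightarrow> real)
    \<Rightarrow> ('l \<Rightarrow> 'a list \<Rightarrow> 'b list \<Rightarrow> 'b \<Rightarrow> real) \<Rightarrow> real" where
  "gamma T M p q \<sigma> \<tau> = (\<Sum>k\<in>UNIV. \<Sum>l\<in>UNIV. p k * q l * cond_payoff T M \<sigma> \<tau> k l)"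

definition security1 where
  "security1 T M p q \<sigma> \<longleftrightarrow> \<sigma> \<in> strat1 \<and>
     (\<forall>\<sigma>'\<in>strat1. (INF \<tau>\<in>strat2. gamma T M p q \<sigma>' \<tau>) \<le> (INF \<tau>\<in>strat2. gamma T M p q \<sigma> \<tau>))"

definition security2 where
  "security2 T M p q \<tau> \<longleftrightarrow> \<tau> \<in> strat2 \<and>
     (\<forall>\<tau>'\<in>strat2. (SUP \<sigma>\<in>strat1. gamma T M p q \<sigma> \<tau>) \<le> (SUP \<sigma>\<in>strat1. gamma T M p q \<sigma> \<tau>'))"

text \<open>Realization plan of sigma (x^{a_t}_{k,h^A_t,h^B_t}); ha, hb are the histories
  before stage t, a the stage-t action.\<close>
definition realization_plan1 where
  "realization_plan1 p \<sigma> k ha hb a =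
     p k * (\<Prod>s<length ha. \<sigma> k (take s ha) (take s hb) (ha ! s)) * \<sigma> k ha hb a"

definition realization_plan2 where
  "realization_plan2 q \<tau> l ha hb b =
     q l * (\<Prod>s<length hb. \<tau> l (take s ha) (take s hb) (hb ! s)) * \<tau> l ha hb b"

text \<open>u_{l,0}(x) and w_{k,0}(y), written in terms of the strategy whose
  realization plan is x resp. y (they depend on the strategy only through it).\<close>
definition u0 where
  "u0 T M p \<sigma> l = (INF \<tau>\<in>strat2. \<Sum>k\<in>UNIV. p k * cond_payoff T M \<sigma> \<tau> k l)"

definition w0 where
  "w0 T M q \<tau> k = (SUP \<sigma>\<in>strat1. \<Sum>l\<in>UNIV. q l * cond_payoff T M \<sigma> \<tau> k l)"

text \<open>Dual games. Value taken as max-min (lower value); equal to min-max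
  by the minimax theorem for these finite games.\<close>
definition dual1_value where
  "dual1_value T M \<mu> q =
    (SUP (\<pi>, \<sigma>)\<in>{\<pi>. distr \<pi>} \<times> strat1. INF \<tau>\<in>strat2.
       \<Sum>k\<in>UNIV. \<pi> k * (\<mu> k + (\<Sum>l\<in>UNIV. q l * cond_payoff T M \<sigma> \<tau> k l)))"

definition dual2_value where
  "dual2_value T M p \<nu> =
    (SUP \<sigma>\<in>strat1. INF (\<rho>, \<tau>)\<in>{\<rho>. distr \<rho>} \<times> strat2.
       \<Sum>l\<in>UNIV. \<rho> l * (\<nu> l + (\<Sum>k\<in>UNIV. p k * cond_payoff T M \<sigma> \<tau> k l)))"

end

theory Submission
  imports Defs
begin

lemma distrD: "distr d \<Longrightarrow> 0 \<le> d x" "distr d \<Longrightarrow> sum d UNIV = 1"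
  by (auto simp: distr_def)

lemma strat1D: "\<sigma> \<in> strat1 \<Longrightarrow> distr (\<sigma> k ha hb)" by (simp add: strat1_def)
lemma strat2D: "\<tau> \<in> strat2 \<Longrightarrow> distr (\<tau> l ha hb)" by (simp add: strat2_def)

definition rp1 :: "('k \<Rightarrow> 'a list \<Rightarrow> 'b list \<Rightarrow> 'a \<Rightarrow> real) \<Rightarrow> 'k \<Rightarrow> 'a list \<Rightarrow> 'b list \<Rightarrow> real" where
  "rp1 \<sigma> k ha hb = (\<Prod>s<length ha. \<sigma> k (take s ha) (take s hb) (ha ! s))"

lemma rp1_nil[simp]: "rp1 \<sigma> k [] hb = 1" by (simp add: rp1_def)

lemma rp1_snoc: "length ha = length hb \<Longrightarrow>
   rp1 \<sigma> k (ha@[a]) (hb@[b]) = rp1 \<sigma> k ha hb * \<sigma> k ha hb a"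
  unfolding rp1_def
  by (simp add: prod.lessThan_Suc nth_append)

lemma rp1_nonneg: "\<sigma> \<in> strat1 \<Longrightarrow> 0 \<le> rp1 \<sigma> k ha hb"
  unfolding rp1_def by (intro prod_nonneg) (auto dest: strat1D distrD)

definition mix1 where
  "mix1 c \<sigma> \<sigma>' k ha hb a =
    (let D = c * rp1 \<sigma> k ha hb + (1-c) * rp1 \<sigma>' k ha hb in
     if D = 0 then \<sigma> k ha hb a
     else (c * rp1 \<sigma> k ha hb * \<sigma> k ha hb a + (1-c) * rp1 \<sigma>' k ha hb * \<sigma>' k ha hb a) / D)"

lemma mix1_strat:
  assumes "\<sigma> \<in> strat1" "\<sigma>' \<in> strat1" "0 \<le> c" "c \<le> 1"
  shows "mix1 c \<sigma> \<sigma>' \<in> strat1"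
  unfolding strat1_def
proof (intro CollectI allI)
  fix k ha hb
  define X where "X = rp1 \<sigma> k ha hb"
  define X' where "X' = rp1 \<sigma>' k ha hb"
  define D where "D = c * X + (1-c) * X'"
  have X: "0 \<le> X" "0 \<le> X'" unfolding X_def X'_def by (simp_all add: rp1_nonneg assms)
  have D: "0 \<le> D" using X assms unfolding D_def by auto
  have ds: "distr (\<sigma> k ha hb)" "distr (\<sigma>' k ha hb)" using assms by (auto dest: strat1D)
  show "distr (mix1 c \<sigma> \<sigma>' k ha hb)"
  proof (cases "D = 0")
    case True
    then show ?thesis using ds unfolding mix1_def Let_def X_def[symmetric] X'_def[symmetric] D_def[symmetric] by simp
  next
    case False
    have eq: "mix1 c \<sigma> \<sigma>' k ha hb = (\<lambda>a. (c * X * \<sigma> k ha hb a + (1-c) * X' * \<sigma>' k ha hb a) / D)"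
      using False unfolding mix1_def Let_def X_def[symmetric] X'_def[symmetric] D_def[symmetric] by (simp add: fun_eq_iff)
    have "(\<Sum>a\<in>UNIV. (c * X * \<sigma> k ha hb a + (1-c) * X' * \<sigma>' k ha hb a) / D)
        = (c * X * sum (\<sigma> k ha hb) UNIV + (1-c) * X' * sum (\<sigma>' k ha hb) UNIV) / D"
      by (simp add: sum_divide_distrib[symmetric] sum.distrib sum_distrib_left)
    also have "\<dots> = 1" using ds False unfolding D_def by (simp add: distrD)
    finally show ?thesis unfolding eq distr_def
      using X assms D ds by (auto intro!: divide_nonneg_nonneg add_nonneg_nonneg mult_nonneg_nonneg simp: distrD)
  qed
qed

lemma rp1_mix:
  assumes "\<sigma> \<in> strat1" "\<sigma>' \<in> strat1" "0 \<le> c" "c \<le> 1"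
  shows "length ha = length hb \<Longrightarrow>
     rp1 (mix1 c \<sigma> \<sigma>' ) k ha hb = c * rp1 \<sigma> k ha hb + (1-c) * rp1 \<sigma>' k ha hb"
proof (induction ha arbitrary: hb rule: rev_induct)
  case Nil
  then show ?case by simp
next
  case (snoc x xs)
  then obtain ys y where hb: "hb = ys @ [y]" and len: "length xs = length ys"
    by (metis length_append_singleton rev_exhaust length_0_conv nat.distinct(1) list.size(3) Suc_inject)
  define X where "X = rp1 \<sigma> k xs ys"
  define X' where "X' = rp1 \<sigma>' k xs ys"
  have X: "0 \<le> X" "0 \<le> X'" unfolding X_def X'_def by (simp_all add: rp1_nonneg assms)
  have IH: "rp1 (mix1 c \<sigma> \<sigma>') k xs ys = c * X + (1-c) * X'" using snoc.IH len X_def X'_def by simp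
  show ?case
  proof (cases "c * X + (1-c) * X' = 0")
    case True
    then have z: "c * X = 0" "(1-c) * X' = 0" using X assms by (auto simp: add_nonneg_eq_0_iff)
    have "c * (X * \<sigma> k xs ys x) + (1 - c) * (X' * \<sigma>' k xs ys x) = 
       (c * X) * \<sigma> k xs ys x + ((1 - c) * X') * \<sigma>' k xs ys x" by (simp add: algebra_simps)
    also have "\<dots> = 0" unfolding z by simp
    finally have z2: "c * (X * \<sigma> k xs ys x) + (1 - c) * (X' * \<sigma>' k xs ys x) = 0" .
    show ?thesis unfolding hb using len IH True z2
      by (simp add: rp1_snoc X_def[symmetric] X'_def[symmetric])
  next
    case False
    have m: "mix1 c \<sigma> \<sigma>' k xs ys x = (c * X * \<sigma> k xs ys x + (1-c) * X' * \<sigma>' k xs ys x) / (c * X + (1-c) * X')"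
      using False unfolding mix1_def Let_def X_def X'_def by simp
    have "rp1 (mix1 c \<sigma> \<sigma>') k (xs @ [x]) hb = (c * X + (1-c) * X') * mix1 c \<sigma> \<sigma>' k xs ys x"
      unfolding hb using len IH by (simp add: rp1_snoc)
    also have "\<dots> = c * X * \<sigma> k xs ys x + (1-c) * X' * \<sigma>' k xs ys x" unfolding m using False by simp
    finally show ?thesis unfolding hb using len
      by (simp add: rp1_snoc X_def[symmetric] X'_def[symmetric] algebra_simps)
  qed
qed

lemma pf_mix1:
  assumes "\<sigma> \<in> strat1" "\<sigma>' \<in> strat1" "0 \<le> c" "c \<le> 1"
  shows "length ha = length hb \<Longrightarrow>
     rp1 (mix1 c \<sigma> \<sigma>') k ha hb * payoff_from n M (mix1 c \<sigma> \<sigma>') \<tau> k l ha hb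
   = c * rp1 \<sigma> k ha hb * payoff_from n M \<sigma> \<tau> k l ha hb
     + (1-c) * rp1 \<sigma>' k ha hb * payoff_from n M \<sigma>' \<tau> k l ha hb"
proof (induction n arbitrary: ha hb)
  case 0
  then show ?case by simp
next
  case (Suc n)
  let ?m = "mix1 c \<sigma> \<sigma>'"
  let ?R = "rp1 ?m k" and ?X = "rp1 \<sigma> k" and ?X' = "rp1 \<sigma>' k"
  have len: "length (ha @ [a]) = length (hb @ [b])" for a b using Suc.prems by simp
  have "?R ha hb * payoff_from (Suc n) M ?m \<tau> k l ha hb
     = (\<Sum>a\<in>UNIV. \<Sum>b\<in>UNIV. \<tau> l ha hb b * (?R ha hb * ?m k ha hb a) *
            (M k l a b + payoff_from n M ?m \<tau> k l (ha @ [a]) (hb @ [b])))"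
    by (simp add: sum_distrib_left algebra_simps)
  also have "\<dots> = (\<Sum>a\<in>UNIV. \<Sum>b\<in>UNIV. \<tau> l ha hb b *
      ((c * ?X (ha@[a]) (hb@[b]) + (1-c) * ?X' (ha@[a]) (hb@[b])) * M k l a b
       + (c * ?X (ha@[a]) (hb@[b]) * payoff_from n M \<sigma> \<tau> k l (ha @ [a]) (hb @ [b])
         + (1-c) * ?X' (ha@[a]) (hb@[b]) * payoff_from n M \<sigma>' \<tau> k l (ha @ [a]) (hb @ [b]))))"
  proof (intro sum.cong refl)
    fix a b
    have e: "?R ha hb * ?m k ha hb a = ?R (ha@[a]) (hb@[b])" using Suc.prems by (simp add: rp1_snoc)
    show "\<tau> l ha hb b * (?R ha hb * ?m k ha hb a) *
            (M k l a b + payoff_from n M ?m \<tau> k l (ha @ [a]) (hb @ [b])) =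
          \<tau> l ha hb b *
      ((c * ?X (ha@[a]) (hb@[b]) + (1-c) * ?X' (ha@[a]) (hb@[b])) * M k l a b
       + (c * ?X (ha@[a]) (hb@[b]) * payoff_from n M \<sigma> \<tau> k l (ha @ [a]) (hb @ [b])
         + (1-c) * ?X' (ha@[a]) (hb@[b]) * payoff_from n M \<sigma>' \<tau> k l (ha @ [a]) (hb @ [b])))"
      unfolding e Suc.IH[OF len, symmetric] rp1_mix[OF assms len, symmetric] by (simp add: algebra_simps)
  qed
  also have "\<dots> = c * ?X ha hb * payoff_from (Suc n) M \<sigma> \<tau> k l ha hb
     + (1-c) * ?X' ha hb * payoff_from (Suc n) M \<sigma>' \<tau> k l ha hb"
    using Suc.prems by (simp add: rp1_snoc sum_distrib_left sum.distrib[symmetric] algebra_simps)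
  finally show ?case .
qed

lemma gamma_mix1:
  assumes "\<sigma> \<in> strat1" "\<sigma>' \<in> strat1" "0 \<le> c" "c \<le> 1"
  shows "gamma T M p q (mix1 c \<sigma> \<sigma>') \<tau> = c * gamma T M p q \<sigma> \<tau> + (1-c) * gamma T M p q \<sigma>' \<tau>"
proof -
  have "cond_payoff T M (mix1 c \<sigma> \<sigma>') \<tau> k l = c * cond_payoff T M \<sigma> \<tau> k l + (1-c) * cond_payoff T M \<sigma>' \<tau> k l" for k l
    using pf_mix1[OF assms, of "[]" "[]" k T M \<tau> l] by (simp add: cond_payoff_def)
  then show ?thesis unfolding gamma_def
    by (simp add: sum_distrib_left sum.distrib[symmetric] ring_distribs mult.left_commute)
qed

definition rp2 :: "('l \<Rightarrow> 'a list \<Rightarrow> 'b list \<Rightarrow> 'b \<Rightarrow> real) \<Rightarrow> 'l \<Rightarrow> 'a list \<Rightarrow> 'b list \<Rightarrow> real" where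
  "rp2 \<tau> l ha hb = (\<Prod>s<length hb. \<tau> l (take s ha) (take s hb) (hb ! s))"

lemma rp2_nil[simp]: "rp2 \<tau> l ha [] = 1" by (simp add: rp2_def)

lemma rp2_snoc: "length ha = length hb \<Longrightarrow>
   rp2 \<tau> l (ha@[a]) (hb@[b]) = rp2 \<tau> l ha hb * \<tau> l ha hb b"
  unfolding rp2_def
  by (simp add: nth_append)

lemma rp2_nonneg: "\<tau> \<in> strat2 \<Longrightarrow> 0 \<le> rp2 \<tau> l ha hb"
  unfolding rp2_def by (intro prod_nonneg) (auto dest: strat2D distrD)

definition mix2 where
  "mix2 c \<tau> \<tau>' l ha hb b =
    (let D = c * rp2 \<tau> l ha hb + (1-c) * rp2 \<tau>' l ha hb in
     if D = 0 then \<tau> l ha hb b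
     else (c * rp2 \<tau> l ha hb * \<tau> l ha hb b + (1-c) * rp2 \<tau>' l ha hb * \<tau>' l ha hb b) / D)"

lemma mix2_strat:
  assumes "\<tau> \<in> strat2" "\<tau>' \<in> strat2" "0 \<le> c" "c \<le> 1"
  shows "mix2 c \<tau> \<tau>' \<in> strat2"
  unfolding strat2_def
proof (intro CollectI allI)
  fix l ha hb
  define X where "X = rp2 \<tau> l ha hb"
  define X' where "X' = rp2 \<tau>' l ha hb"
  define D where "D = c * X + (1-c) * X'"
  have X: "0 \<le> X" "0 \<le> X'" unfolding X_def X'_def by (simp_all add: rp2_nonneg assms)
  have D: "0 \<le> D" using X assms unfolding D_def by auto
  have ds: "distr (\<tau> l ha hb)" "distr (\<tau>' l ha hb)" using assms by (auto dest: strat2D)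
  show "distr (mix2 c \<tau> \<tau>' l ha hb)"
  proof (cases "D = 0")
    case True
    then show ?thesis using ds unfolding mix2_def Let_def X_def[symmetric] X'_def[symmetric] D_def[symmetric] by simp
  next
    case False
    have eq: "mix2 c \<tau> \<tau>' l ha hb = (\<lambda>b. (c * X * \<tau> l ha hb b + (1-c) * X' * \<tau>' l ha hb b) / D)"
      using False unfolding mix2_def Let_def X_def[symmetric] X'_def[symmetric] D_def[symmetric] by (simp add: fun_eq_iff)
    have "(\<Sum>b\<in>UNIV. (c * X * \<tau> l ha hb b + (1-c) * X' * \<tau>' l ha hb b) / D)
        = (c * X * sum (\<tau> l ha hb) UNIV + (1-c) * X' * sum (\<tau>' l ha hb) UNIV) / D"
      by (simp add: sum_divide_distrib[symmetric] sum.distrib sum_distrib_left)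
    also have "\<dots> = 1" using ds False unfolding D_def by (simp add: distrD)
    finally show ?thesis unfolding eq distr_def
      using X assms D ds by (auto intro!: divide_nonneg_nonneg add_nonneg_nonneg mult_nonneg_nonneg simp: distrD)
  qed
qed

lemma rp2_mix:
  assumes "\<tau> \<in> strat2" "\<tau>' \<in> strat2" "0 \<le> c" "c \<le> 1"
  shows "length ha = length hb \<Longrightarrow>
     rp2 (mix2 c \<tau> \<tau>' ) l ha hb = c * rp2 \<tau> l ha hb + (1-c) * rp2 \<tau>' l ha hb"
proof (induction hb arbitrary: ha rule: rev_induct)
  case Nil
  then show ?case by simp
next
  case (snoc x ys)
  then obtain xs y where ha: "ha = xs @ [y]" and len: "length xs = length ys"
    by (metis length_append_singleton rev_exhaust length_0_conv nat.distinct(1) list.size(3) Suc_inject)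
  define X where "X = rp2 \<tau> l xs ys"
  define X' where "X' = rp2 \<tau>' l xs ys"
  have X: "0 \<le> X" "0 \<le> X'" unfolding X_def X'_def by (simp_all add: rp2_nonneg assms)
  have IH: "rp2 (mix2 c \<tau> \<tau>') l xs ys = c * X + (1-c) * X'" using snoc.IH len X_def X'_def by simp
  show ?case
  proof (cases "c * X + (1-c) * X' = 0")
    case True
    then have z: "c * X = 0" "(1-c) * X' = 0" using X assms by (auto simp: add_nonneg_eq_0_iff)
    have "c * (X * \<tau> l xs ys x) + (1 - c) * (X' * \<tau>' l xs ys x) = 
       (c * X) * \<tau> l xs ys x + ((1 - c) * X') * \<tau>' l xs ys x" by (simp add: algebra_simps)
    also have "\<dots> = 0" unfolding z by simp
    finally have z2: "c * (X * \<tau> l xs ys x) + (1 - c) * (X' * \<tau>' l xs ys x) = 0" .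
    show ?thesis unfolding ha using len IH True z2
      by (simp add: rp2_snoc X_def[symmetric] X'_def[symmetric])
  next
    case False
    have m: "mix2 c \<tau> \<tau>' l xs ys x = (c * X * \<tau> l xs ys x + (1-c) * X' * \<tau>' l xs ys x) / (c * X + (1-c) * X')"
      using False unfolding mix2_def Let_def X_def X'_def by simp
    have "rp2 (mix2 c \<tau> \<tau>') l ha (ys @ [x]) = (c * X + (1-c) * X') * mix2 c \<tau> \<tau>' l xs ys x"
      unfolding ha using len IH by (simp add: rp2_snoc)
    also have "\<dots> = c * X * \<tau> l xs ys x + (1-c) * X' * \<tau>' l xs ys x" unfolding m using False by simp
    finally show ?thesis unfolding ha using len
      by (simp add: rp2_snoc X_def[symmetric] X'_def[symmetric] algebra_simps)
  qed
qed

lemma pf_mix2: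
  assumes "\<tau> \<in> strat2" "\<tau>' \<in> strat2" "0 \<le> c" "c \<le> 1"
  shows "length ha = length hb \<Longrightarrow>
     rp2 (mix2 c \<tau> \<tau>') l ha hb * payoff_from n M \<sigma> (mix2 c \<tau> \<tau>') k l ha hb
   = c * rp2 \<tau> l ha hb * payoff_from n M \<sigma> \<tau> k l ha hb
     + (1-c) * rp2 \<tau>' l ha hb * payoff_from n M \<sigma> \<tau>' k l ha hb"
proof (induction n arbitrary: ha hb)
  case 0
  then show ?case by simp
next
  case (Suc n)
  let ?m = "mix2 c \<tau> \<tau>'"
  let ?R = "rp2 ?m l" and ?X = "rp2 \<tau> l" and ?X' = "rp2 \<tau>' l"
  have len: "length (ha @ [a]) = length (hb @ [b])" for a b using Suc.prems by simp
  have "?R ha hb * payoff_from (Suc n) M \<sigma> ?m k l ha hb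
     = (\<Sum>a\<in>UNIV. \<Sum>b\<in>UNIV. \<sigma> k ha hb a * (?R ha hb * ?m l ha hb b) *
            (M k l a b + payoff_from n M \<sigma> ?m k l (ha @ [a]) (hb @ [b])))"
    by (simp add: sum_distrib_left algebra_simps)
  also have "\<dots> = (\<Sum>a\<in>UNIV. \<Sum>b\<in>UNIV. \<sigma> k ha hb a *
      ((c * ?X (ha@[a]) (hb@[b]) + (1-c) * ?X' (ha@[a]) (hb@[b])) * M k l a b
       + (c * ?X (ha@[a]) (hb@[b]) * payoff_from n M \<sigma> \<tau> k l (ha @ [a]) (hb @ [b])
         + (1-c) * ?X' (ha@[a]) (hb@[b]) * payoff_from n M \<sigma> \<tau>' k l (ha @ [a]) (hb @ [b]))))"
  proof (intro sum.cong refl)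
    fix a b
    have e: "?R ha hb * ?m l ha hb b = ?R (ha@[a]) (hb@[b])" using Suc.prems by (simp add: rp2_snoc)
    show "\<sigma> k ha hb a * (?R ha hb * ?m l ha hb b) *
            (M k l a b + payoff_from n M \<sigma> ?m k l (ha @ [a]) (hb @ [b])) =
          \<sigma> k ha hb a *
      ((c * ?X (ha@[a]) (hb@[b]) + (1-c) * ?X' (ha@[a]) (hb@[b])) * M k l a b
       + (c * ?X (ha@[a]) (hb@[b]) * payoff_from n M \<sigma> \<tau> k l (ha @ [a]) (hb @ [b])
         + (1-c) * ?X' (ha@[a]) (hb@[b]) * payoff_from n M \<sigma> \<tau>' k l (ha @ [a]) (hb @ [b])))"
      unfolding e Suc.IH[OF len, symmetric] rp2_mix[OF assms len, symmetric] by (simp add: algebra_simps)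
  qed
  also have "\<dots> = c * ?X ha hb * payoff_from (Suc n) M \<sigma> \<tau> k l ha hb
     + (1-c) * ?X' ha hb * payoff_from (Suc n) M \<sigma> \<tau>' k l ha hb"
    using Suc.prems by (simp add: rp2_snoc sum_distrib_left sum.distrib[symmetric] algebra_simps)
  finally show ?case .
qed

lemma gamma_mix2:
  assumes "\<tau> \<in> strat2" "\<tau>' \<in> strat2" "0 \<le> c" "c \<le> 1"
  shows "gamma T M p q \<sigma> (mix2 c \<tau> \<tau>') = c * gamma T M p q \<sigma> \<tau> + (1-c) * gamma T M p q \<sigma> \<tau>'"
proof -
  have "cond_payoff T M \<sigma> (mix2 c \<tau> \<tau>') k l = c * cond_payoff T M \<sigma> \<tau> k l + (1-c) * cond_payoff T M \<sigma> \<tau>' k l" for k l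
    using pf_mix2[OF assms, of "[]" "[]" l T M \<sigma> k] by (simp add: cond_payoff_def)
  then show ?thesis unfolding gamma_def
    by (simp add: sum_distrib_left sum.distrib[symmetric] ring_distribs mult.left_commute)
qed

lemma mixn2:
  assumes "finite F"
  shows "F \<noteq> {} \<Longrightarrow> F \<subseteq> strat2 \<Longrightarrow> (\<forall>i\<in>F. 0 \<le> w i) \<Longrightarrow> sum w F = 1 \<Longrightarrow>
     \<exists>\<tau>\<in>strat2. \<forall>\<sigma>. gamma T M p q \<sigma> \<tau> = (\<Sum>i\<in>F. w i * gamma T M p q \<sigma> i)"
  using assms
proof (induction F arbitrary: w rule: finite_induct)
  case empty
  then show ?case by simp
next
  case (insert j F)
  have wj: "0 \<le> w j" using insert by simp
  have wF: "\<forall>i\<in>F. 0 \<le> w i" using insert by simp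
  have s: "w j + sum w F = 1" using insert by simp
  have sF: "0 \<le> sum w F" using wF by (simp add: sum_nonneg)
  show ?case
  proof (cases "sum w F = 0")
    case True
    then have z: "\<forall>i\<in>F. w i = 0" using wF insert.hyps(1) sum_nonneg_eq_0_iff by blast
    have "w j = 1" using s True by simp
    then show ?thesis using insert z by (intro bexI[of _ j]) auto
  next
    case False
    then have Fne: "F \<noteq> {}" by auto
    define w' where "w' i = w i / sum w F" for i
    have FS: "F \<subseteq> strat2" using insert.prems by simp
    have w'n: "\<forall>i\<in>F. 0 \<le> w' i" using wF sF by (simp add: w'_def)
    have w's: "sum w' F = 1" using False by (simp add: w'_def sum_divide_distrib[symmetric])
    have "\<exists>\<tau>\<in>strat2. \<forall>\<sigma>. gamma T M p q \<sigma> \<tau> = (\<Sum>i\<in>F. w' i * gamma T M p q \<sigma> i)"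
      by (rule insert.IH[OF Fne FS w'n w's])
    then obtain \<tau>F where tF: "\<tau>F \<in> strat2" "\<And>\<sigma>. gamma T M p q \<sigma> \<tau>F = (\<Sum>i\<in>F. w' i * gamma T M p q \<sigma> i)"
      by blast
    have wj1: "w j \<le> 1" using s sF by simp
    have j: "j \<in> strat2" using insert by simp
    show ?thesis
    proof (intro bexI allI)
      show "mix2 (w j) j \<tau>F \<in> strat2" using mix2_strat[OF j tF(1) wj wj1] .
      fix \<sigma>
      have "gamma T M p q \<sigma> (mix2 (w j) j \<tau>F) = w j * gamma T M p q \<sigma> j + sum w F * (\<Sum>i\<in>F. w' i * gamma T M p q \<sigma> i)"
      proof -
        have e: "1 - w j = sum w F" using s by simp
        show ?thesis using gamma_mix2[OF j tF(1) wj wj1, of T M p q \<sigma>] tF(2)[of \<sigma>] unfolding e by simp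
      qed
      also have "\<dots> = w j * gamma T M p q \<sigma> j + (\<Sum>i\<in>F. w i * gamma T M p q \<sigma> i)"
        using False by (simp add: sum_distrib_left w'_def)
      finally show "gamma T M p q \<sigma> (mix2 (w j) j \<tau>F) = (\<Sum>i\<in>insert j F. w i * gamma T M p q \<sigma> i)"
        using insert.hyps by simp
    qed
  qed
qed

lemma alt2:
  fixes f g :: "'x \<Rightarrow> real"
  assumes mix: "\<And>s t c. s \<in> S \<Longrightarrow> t \<in> S \<Longrightarrow> 0 \<le> c \<Longrightarrow> c \<le> 1 \<Longrightarrow>
      \<exists>u\<in>S. f u = c * f s + (1-c) * f t \<and> g u = c * g s + (1-c) * g t"
    and cov: "\<And>s. s \<in> S \<Longrightarrow> f s \<le> 0 \<or> g s \<le> 0"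
  shows "\<exists>\<alpha>. 0 \<le> \<alpha> \<and> \<alpha> \<le> 1 \<and> (\<forall>s\<in>S. \<alpha> * f s + (1-\<alpha>) * g s \<le> 0)"
proof -
  define A where "A = {s\<in>S. 0 < f s}"
  define B where "B = {s\<in>S. 0 < g s}"
  show ?thesis
  proof (cases "A = {}")
    case True
    then show ?thesis unfolding A_def by (intro exI[of _ 1]) (auto simp: not_less)
  next
    case Ane: False
    show ?thesis
    proof (cases "B = {}")
      case True
      then show ?thesis unfolding B_def by (intro exI[of _ 0]) (auto simp: not_less)
    next
      case Bne: False
      define r where "r s = - g s / (f s - g s)" for s
      define r' where "r' t = g t / (g t - f t)" for t
      have key: "r' t \<le> r s" if s: "s \<in> A" and t: "t \<in> B" for s t
      proof (rule ccontr)
        assume "\<not> r' t \<le> r s"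
        define a where "a = f s" define b where "b = - g s"
        define c where "c = - f t" define d where "d = g t"
        have pos: "0 < a" "0 \<le> b" "0 \<le> c" "0 < d"
          using s t cov unfolding A_def B_def a_def b_def c_def d_def by (auto simp: not_less) force+
        have "b / (a + b) < d / (d + c)" using \<open>\<not> r' t \<le> r s\<close> unfolding r_def r'_def a_def b_def c_def d_def
          by (simp add: algebra_simps)
        then have lt: "b * c < a * d" using pos by (simp add: field_simps)
        define m where "m = (c + d) / (a + b + c + d)"
        have m: "0 \<le> m" "m \<le> 1" using pos unfolding m_def by auto
        obtain u where u: "u \<in> S" "f u = m * f s + (1-m) * f t" "g u = m * g s + (1-m) * g t"
          using mix[of s t m] s t m unfolding A_def B_def by auto
        have m1: "1 - m = (a + b) / (a + b + c + d)" using pos unfolding m_def by (simp add: field_simps)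
        have "f u = m * a - (1-m) * c" using u unfolding a_def c_def by simp
        also have "\<dots> = ((c+d) * a - (a+b) * c) / (a + b + c + d)" unfolding m1 unfolding m_def using pos
          by (simp add: diff_divide_distrib)
        also have "\<dots> = (a * d - b * c) / (a + b + c + d)" by (simp add: algebra_simps)
        finally have fu: "f u = (a * d - b * c) / (a + b + c + d)" .
        have "g u = - m * b + (1-m) * d" using u unfolding b_def d_def by simp
        also have "\<dots> = ((a+b) * d - (c+d) * b) / (a + b + c + d)" unfolding m1 unfolding m_def using pos
          by (simp add: diff_divide_distrib)
        also have "\<dots> = (a * d - b * c) / (a + b + c + d)" by (simp add: algebra_simps)
        finally have gu: "g u = (a * d - b * c) / (a + b + c + d)" .
        note fu gu
        then have "0 < f u" "0 < g u" using lt pos by auto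
        then show False using cov[OF u(1)] by auto
      qed
      obtain s0 where s0: "s0 \<in> A" using Ane by auto
      define \<alpha> where "\<alpha> = (SUP t\<in>B. r' t)"
      have bdd: "bdd_above (r' ` B)" using key[OF s0] by (intro bdd_aboveI2[where M="r s0"]) auto
      have up: "r' t \<le> \<alpha>" if "t \<in> B" for t unfolding \<alpha>_def using bdd that by (rule cSUP_upper2) simp
      have lo: "\<alpha> \<le> r s" if "s \<in> A" for s unfolding \<alpha>_def using Bne key that by (intro cSUP_least) auto
      obtain t0 where t0: "t0 \<in> B" using Bne by auto
      have "0 \<le> r' t0" using t0 cov unfolding r'_def B_def by (fastforce intro: divide_nonneg_nonneg simp: not_less)
      then have a0: "0 \<le> \<alpha>" using up[OF t0] by simp
      have "r s0 \<le> 1"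
      proof -
        have f0: "0 < f s0" and g0: "g s0 \<le> 0" using s0 cov[of s0] unfolding A_def by auto
        then have ps: "0 < f s0 - g s0" by simp
        show ?thesis unfolding r_def by (subst pos_divide_le_eq[OF ps]) (use f0 in simp)
      qed
      then have a1: "\<alpha> \<le> 1" using lo[OF s0] by simp
      show ?thesis
      proof (intro exI conjI ballI a0 a1)
        fix s assume sS: "s \<in> S"
        show "\<alpha> * f s + (1 - \<alpha>) * g s \<le> 0"
        proof (cases "0 < f s")
          case True
          then have sA: "s \<in> A" and gs: "g s \<le> 0" using sS cov[of s] unfolding A_def by auto
          have ps: "0 < f s - g s" using True gs by simp
          have "\<alpha> * (f s - g s) \<le> - g s" using lo[OF sA] unfolding r_def
            by (subst (asm) pos_le_divide_eq[OF ps])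
          then show ?thesis by (simp add: algebra_simps)
        next
          case fF: False
          show ?thesis
          proof (cases "0 < g s")
            case True
            then have sB: "s \<in> B" using sS unfolding B_def by auto
            have ps: "0 < g s - f s" using True fF by simp
            have "g s \<le> \<alpha> * (g s - f s)" using up[OF sB] unfolding r'_def
              by (subst (asm) pos_divide_le_eq[OF ps]) (simp add: mult.commute)
            then show ?thesis by (simp add: algebra_simps)
          next
            case False
            then show ?thesis using fF a0 a1
              by (metis add_nonpos_nonpos diff_ge_0_iff_ge mult_nonneg_nonpos not_less)
          qed
        qed
      qed (simp_all add: a0 a1)
    qed
  qed
qed

lemma altn:
  fixes f :: "'i \<Rightarrow> 'x \<Rightarrow> real"
  assumes "finite I"
  shows "I \<noteq> {} \<Longrightarrow> I \<subseteq> J \<Longrightarrow>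
    (\<forall>s\<in>S. \<forall>t\<in>S. \<forall>c::real. 0 \<le> c \<longrightarrow> c \<le> 1 \<longrightarrow> (\<exists>u\<in>S. \<forall>i\<in>J. f i u = c * f i s + (1-c) * f i t)) \<Longrightarrow>
    (\<forall>s\<in>S. \<exists>i\<in>I. f i s \<le> 0) \<Longrightarrow>
    \<exists>w. (\<forall>i\<in>I. 0 \<le> w i) \<and> sum w I = 1 \<and> (\<forall>s\<in>S. (\<Sum>i\<in>I. w i * f i s) \<le> 0)"
  using assms
proof (induction I arbitrary: S rule: finite_induct)
  case empty
  then show ?case by simp
next
  case (insert j F)
  note mixS = insert.prems(3)
  have jJ: "j \<in> J" and FJ: "F \<subseteq> J" using insert.prems by auto
  show ?case
  proof (cases "F = {}")
    case True
    then show ?thesis using insert.prems(4)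
      by (intro exI[of _ "\<lambda>_. 1"]) auto
  next
    case Fne: False
    define S' where "S' = {s\<in>S. 0 < f j s}"
    have mixS': "\<forall>s\<in>S'. \<forall>t\<in>S'. \<forall>c::real. 0 \<le> c \<longrightarrow> c \<le> 1 \<longrightarrow> (\<exists>u\<in>S'. \<forall>i\<in>J. f i u = c * f i s + (1-c) * f i t)"
    proof (intro ballI allI impI)
      fix s t and c :: real assume st: "s \<in> S'" "t \<in> S'" and c: "0 \<le> c" "c \<le> 1"
      then obtain u where u: "u \<in> S" "\<forall>i\<in>J. f i u = c * f i s + (1-c) * f i t"
        using mixS unfolding S'_def by blast
      have fs: "0 < f j s" "0 < f j t" using st unfolding S'_def by auto
      have "0 < c * f j s + (1-c) * f j t"
      proof (cases "c = 0")
        case True then show ?thesis using fs by simp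
      next
        case False
        then have "0 < c * f j s" using c fs by simp
        moreover have "0 \<le> (1-c) * f j t" using c fs by simp
        ultimately show ?thesis by simp
      qed
      then have "u \<in> S'" using u jJ unfolding S'_def by auto
      then show "\<exists>u\<in>S'. \<forall>i\<in>J. f i u = c * f i s + (1-c) * f i t" using u by blast
    qed
    have covS': "\<forall>s\<in>S'. \<exists>i\<in>F. f i s \<le> 0"
      using insert.prems(4) unfolding S'_def by fastforce
    obtain w' where w': "\<forall>i\<in>F. 0 \<le> w' i" "sum w' F = 1" "\<forall>s\<in>S'. (\<Sum>i\<in>F. w' i * f i s) \<le> 0"
      using insert.IH[OF Fne FJ mixS' covS'] by blast
    define g where "g s = (\<Sum>i\<in>F. w' i * f i s)" for s
    have mix2: "\<exists>u\<in>S. g u = c * g s + (1-c) * g t \<and> f j u = c * f j s + (1-c) * f j t"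
      if st: "s \<in> S" "t \<in> S" "0 \<le> c" "c \<le> 1" for s t and c :: real
    proof -
      obtain u where u: "u \<in> S" "\<forall>i\<in>J. f i u = c * f i s + (1-c) * f i t"
        using mixS st by blast
      have "g u = c * g s + (1-c) * g t"
      proof -
        have "g u = (\<Sum>i\<in>F. c * (w' i * f i s) + (1-c) * (w' i * f i t))"
          unfolding g_def
        proof (intro sum.cong refl)
          fix i assume "i \<in> F"
          have e: "f i u = c * f i s + (1-c) * f i t" using u(2) FJ \<open>i \<in> F\<close> by auto
          show "w' i * f i u = c * (w' i * f i s) + (1-c) * (w' i * f i t)" unfolding e by (simp add: algebra_simps)
        qed
        then show ?thesis unfolding g_def by (simp add: sum.distrib sum_distrib_left)
      qed
      then show ?thesis using u jJ by blast
    qed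
    have cov2: "g s \<le> 0 \<or> f j s \<le> 0" if "s \<in> S" for s
      using w'(3) that unfolding S'_def g_def by (auto simp: not_less)
    obtain \<alpha> where a: "0 \<le> \<alpha>" "\<alpha> \<le> 1" "\<forall>s\<in>S. \<alpha> * g s + (1-\<alpha>) * f j s \<le> 0"
      using alt2[of S g "f j", OF mix2 cov2] by blast
    define w where "w i = (if i = j then 1 - \<alpha> else \<alpha> * w' i)" for i
    show ?thesis
    proof (intro exI conjI ballI)
      fix i assume "i \<in> insert j F"
      then show "0 \<le> w i" using a w' unfolding w_def by auto
    next
      have "sum w (insert j F) = (1-\<alpha>) + (\<Sum>i\<in>F. \<alpha> * w' i)"
        using insert.hyps unfolding w_def by (auto intro!: sum.cong)
      then show "sum w (insert j F) = 1" using w'(2) by (simp add: sum_distrib_left[symmetric])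
    next
      fix s assume s: "s \<in> S"
      have "(\<Sum>i\<in>insert j F. w i * f i s) = (1-\<alpha>) * f j s + (\<Sum>i\<in>F. \<alpha> * w' i * f i s)"
        using insert.hyps unfolding w_def by (auto intro!: sum.cong)
      also have "\<dots> = \<alpha> * g s + (1-\<alpha>) * f j s"
        unfolding g_def by (simp add: sum_distrib_left mult.assoc)
      finally show "(\<Sum>i\<in>insert j F. w i * f i s) \<le> 0" using a(3) s by simp
    qed
  qed
qed

definition delta :: "'b \<Rightarrow> 'b \<Rightarrow> real" where "delta b = (\<lambda>b'. if b' = b then 1 else 0)"
definition upd where "upd \<tau> d \<pi> = (\<lambda>l ha hb. if (l, ha, hb) = d then \<pi> else \<tau> l ha hb)"
definition ev where "ev \<tau> d = \<tau> (fst d) (fst (snd d)) (snd (snd d))"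

lemma distr_delta: "distr (delta (b::'b::finite))"
  unfolding distr_def delta_def by simp

lemma loc_ge:
  assumes "\<forall>l' ha' hb'. m \<le> length ha' \<longrightarrow> \<tau>1 l' ha' hb' = \<tau>2 l' ha' hb'"
  shows "m \<le> length ha \<Longrightarrow> payoff_from n M \<sigma> \<tau>1 k l ha hb = payoff_from n M \<sigma> \<tau>2 k l ha hb"
proof (induction n arbitrary: ha hb)
  case 0 then show ?case by simp
next
  case (Suc n)
  have "m \<le> length (ha @ [a])" for a using Suc.prems by simp
  then show ?case using Suc.IH assms Suc.prems by simp
qed

lemma loc_lt:
  assumes "\<forall>l' ha' hb'. length ha' < m \<longrightarrow> length hb' < m \<longrightarrow> \<tau>1 l' ha' hb' = \<tau>2 l' ha' hb'"
  shows "length ha + n \<le> m \<Longrightarrow> length hb + n \<le> m \<Longrightarrow>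
    payoff_from n M \<sigma> \<tau>1 k l ha hb = payoff_from n M \<sigma> \<tau>2 k l ha hb"
proof (induction n arbitrary: ha hb)
  case 0 then show ?case by simp
next
  case (Suc n)
  have "length (ha @ [a]) + n \<le> m" "length (hb @ [b]) + n \<le> m" for a b using Suc.prems by simp_all
  moreover have "\<tau>1 l ha hb = \<tau>2 l ha hb" using assms Suc.prems by simp
  ultimately show ?case using Suc.IH by simp
qed

lemma sum_delta_mult: "(\<Sum>b'\<in>UNIV. delta b b' * F b') = F (b::'b::finite)"
proof -
  have "(\<Sum>b'\<in>UNIV. delta b b' * F b') = (\<Sum>b'\<in>UNIV. if b' = b then F b' else 0)"
    by (rule sum.cong) (auto simp: delta_def)
  then show ?thesis by simp
qed

lemma aff:
  assumes "distr \<pi>"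
  shows "payoff_from n M \<sigma> (upd \<tau> d \<pi>) k l ha hb
     = (\<Sum>b\<in>UNIV. \<pi> b * payoff_from n M \<sigma> (upd \<tau> d (delta b)) k l ha hb)"
proof (induction n arbitrary: ha hb)
  case 0 then show ?case by simp
next
  case (Suc n)
  show ?case
  proof (cases "(l, ha, hb) = d")
    case True
    have lc: "payoff_from n M \<sigma> (upd \<tau> d X) k l (ha @ [a]) hb' = payoff_from n M \<sigma> \<tau> k l (ha @ [a]) hb'" for X a hb'
      by (rule loc_ge[of "Suc (length ha)"]) (auto simp: upd_def True[symmetric])
    have node: "upd \<tau> d X l ha hb = X" for X using True by (simp add: upd_def)
    have "payoff_from (Suc n) M \<sigma> (upd \<tau> d \<pi>) k l ha hb
       = (\<Sum>a\<in>UNIV. \<Sum>b\<in>UNIV. \<pi> b * (\<sigma> k ha hb a * (M k l a b + payoff_from n M \<sigma> \<tau> k l (ha @ [a]) (hb @ [b]))))"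
      by (simp add: lc node algebra_simps)
    also have "\<dots> = (\<Sum>b\<in>UNIV. \<pi> b * (\<Sum>a\<in>UNIV. \<sigma> k ha hb a * (M k l a b + payoff_from n M \<sigma> \<tau> k l (ha @ [a]) (hb @ [b]))))"
      by (subst sum.swap) (simp add: sum_distrib_left)
    also have "\<dots> = (\<Sum>b\<in>UNIV. \<pi> b * payoff_from (Suc n) M \<sigma> (upd \<tau> d (delta b)) k l ha hb)"
    proof (intro sum.cong refl arg_cong2[where f="(*)"])
      fix b
      have "payoff_from (Suc n) M \<sigma> (upd \<tau> d (delta b)) k l ha hb
         = (\<Sum>a\<in>UNIV. \<Sum>b'\<in>UNIV. delta b b' * (\<sigma> k ha hb a * (M k l a b' + payoff_from n M \<sigma> \<tau> k l (ha @ [a]) (hb @ [b']))))"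
        by (simp add: lc node algebra_simps)
      also have "\<dots> = (\<Sum>a\<in>UNIV. \<sigma> k ha hb a * (M k l a b + payoff_from n M \<sigma> \<tau> k l (ha @ [a]) (hb @ [b])))"
        by (simp only: sum_delta_mult)
      finally show "(\<Sum>a\<in>UNIV. \<sigma> k ha hb a * (M k l a b + payoff_from n M \<sigma> \<tau> k l (ha @ [a]) (hb @ [b])))
          = payoff_from (Suc n) M \<sigma> (upd \<tau> d (delta b)) k l ha hb" by simp
    qed
    finally show ?thesis .
  next
    case False
    have u: "upd \<tau> d X l ha hb = \<tau> l ha hb" for X using False by (simp add: upd_def)
    have s1: "sum \<pi> UNIV = 1" using assms by (simp add: distrD)
    have pt: "M' + (\<Sum>b\<in>UNIV. \<pi> b * P b) = (\<Sum>b\<in>UNIV. \<pi> b * (M' + P b))" for M' P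
      by (simp add: distrib_left sum.distrib sum_distrib_right[symmetric] s1)
    let ?c = "\<lambda>a b'. \<sigma> k ha hb a * \<tau> l ha hb b'"
    let ?X = "\<lambda>a b' b. M k l a b' + payoff_from n M \<sigma> (upd \<tau> d (delta b)) k l (ha @ [a]) (hb @ [b'])"
    have "payoff_from (Suc n) M \<sigma> (upd \<tau> d \<pi>) k l ha hb
       = (\<Sum>a\<in>UNIV. \<Sum>b'\<in>UNIV. ?c a b' * (\<Sum>b\<in>UNIV. \<pi> b * ?X a b' b))"
      by (simp only: payoff_from.simps u Suc.IH pt)
    also have "\<dots> = (\<Sum>a\<in>UNIV. \<Sum>b'\<in>UNIV. \<Sum>b\<in>UNIV. \<pi> b * (?c a b' * ?X a b' b))"
      by (simp only: sum_distrib_left mult.left_commute)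
    also have "\<dots> = (\<Sum>a\<in>UNIV. \<Sum>b\<in>UNIV. \<Sum>b'\<in>UNIV. \<pi> b * (?c a b' * ?X a b' b))"
      by (rule sum.cong[OF refl], rule sum.swap)
    also have "\<dots> = (\<Sum>b\<in>UNIV. \<Sum>a\<in>UNIV. \<Sum>b'\<in>UNIV. \<pi> b * (?c a b' * ?X a b' b))"
      by (rule sum.swap)
    also have "\<dots> = (\<Sum>b\<in>UNIV. \<pi> b * (\<Sum>a\<in>UNIV. \<Sum>b'\<in>UNIV. ?c a b' * ?X a b' b))"
      by (simp only: sum_distrib_left)
    also have "\<dots> = (\<Sum>b\<in>UNIV. \<pi> b * payoff_from (Suc n) M \<sigma> (upd \<tau> d (delta b)) k l ha hb)"
      by (simp only: payoff_from.simps u)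
    finally show ?thesis .
  qed
qed

lemma gamma_aff:
  assumes "distr \<pi>"
  shows "gamma T M p q \<sigma> (upd \<tau> d \<pi>) = (\<Sum>b\<in>UNIV. \<pi> b * gamma T M p q \<sigma> (upd \<tau> d (delta b)))"
proof -
  have "gamma T M p q \<sigma> (upd \<tau> d \<pi>) = (\<Sum>k\<in>UNIV. \<Sum>l\<in>UNIV. \<Sum>b\<in>UNIV. \<pi> b * (p k * q l * cond_payoff T M \<sigma> (upd \<tau> d (delta b)) k l))"
    unfolding gamma_def cond_payoff_def aff[OF assms] by (simp add: sum_distrib_left mult.left_commute)
  also have "\<dots> = (\<Sum>k\<in>UNIV. \<Sum>b\<in>UNIV. \<Sum>l\<in>UNIV. \<pi> b * (p k * q l * cond_payoff T M \<sigma> (upd \<tau> d (delta b)) k l))"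
    by (rule sum.cong[OF refl], rule sum.swap)
  also have "\<dots> = (\<Sum>b\<in>UNIV. \<Sum>k\<in>UNIV. \<Sum>l\<in>UNIV. \<pi> b * (p k * q l * cond_payoff T M \<sigma> (upd \<tau> d (delta b)) k l))"
    by (rule sum.swap)
  also have "\<dots> = (\<Sum>b\<in>UNIV. \<pi> b * gamma T M p q \<sigma> (upd \<tau> d (delta b)))"
    unfolding gamma_def by (simp only: sum_distrib_left)
  finally show ?thesis .
qed

lemma exists_le_avg:
  fixes f :: "'b::finite \<Rightarrow> real"
  assumes "distr \<pi>"
  shows "\<exists>b. f b \<le> (\<Sum>b\<in>UNIV. \<pi> b * f b)"
proof -
  have "Min (range f) \<in> range f" by (rule Min_in) auto
  then obtain b0 where "f b0 = Min (range f)" by (metis imageE)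
  then have b0: "\<forall>b. f b0 \<le> f b" by simp
  have "(\<Sum>b\<in>UNIV. \<pi> b * f b0) \<le> (\<Sum>b\<in>UNIV. \<pi> b * f b)"
    using assms b0 by (intro sum_mono mult_left_mono) (auto simp: distrD)
  then show ?thesis using assms by (intro exI[of _ b0]) (simp add: sum_distrib_right[symmetric] distrD)
qed

lemma upd_strat: "\<tau> \<in> strat2 \<Longrightarrow> distr \<pi> \<Longrightarrow> upd \<tau> d \<pi> \<in> strat2"
  unfolding strat2_def upd_def by auto

lemma upd_self: "upd \<tau> d (ev \<tau> d) = \<tau>"
  unfolding upd_def ev_def by (auto simp: fun_eq_iff)

lemma purify:
  fixes \<tau> :: "'l::finite \<Rightarrow> 'a::finite list \<Rightarrow> 'b::finite list \<Rightarrow> 'b \<Rightarrow> real"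
  assumes "finite S"
  shows "\<tau> \<in> strat2 \<Longrightarrow> \<exists>\<tau>'\<in>strat2. (\<forall>d. d \<notin> S \<longrightarrow> ev \<tau>' d = ev \<tau> d) \<and> (\<forall>d\<in>S. \<exists>b. ev \<tau>' d = delta b)
      \<and> gamma T M p q \<sigma> \<tau>' \<le> gamma T M p q \<sigma> \<tau>"
  using assms
proof (induction S arbitrary: \<tau> rule: finite_induct)
  case empty
  then show ?case by blast
next
  case (insert d S)
  obtain \<tau>1 where t1: "\<tau>1 \<in> strat2" "\<forall>d. d \<notin> S \<longrightarrow> ev \<tau>1 d = ev \<tau> d" "\<forall>d\<in>S. \<exists>b. ev \<tau>1 d = delta b"
      "gamma T M p q \<sigma> \<tau>1 \<le> gamma T M p q \<sigma> \<tau>"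
    using insert.IH[OF insert.prems(1)] by blast
  have de: "distr (ev \<tau>1 d)" using t1(1) unfolding ev_def by (rule strat2D)
  obtain b where b: "gamma T M p q \<sigma> (upd \<tau>1 d (delta b)) \<le> (\<Sum>b\<in>UNIV. ev \<tau>1 d b * gamma T M p q \<sigma> (upd \<tau>1 d (delta b)))"
    using exists_le_avg[where f="\<lambda>b. gamma T M p q \<sigma> (upd \<tau>1 d (delta b))", OF de] by blast
  also have "\<dots> = gamma T M p q \<sigma> \<tau>1"
    using gamma_aff[OF de, of T M p q \<sigma> \<tau>1 d] by (simp add: upd_self)
  finally have g: "gamma T M p q \<sigma> (upd \<tau>1 d (delta b)) \<le> gamma T M p q \<sigma> \<tau>" using t1(4) by simp
  have evu: "ev (upd \<tau>1 d X) d' = (if d' = d then X else ev \<tau>1 d')" for X d'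
    unfolding ev_def upd_def by (cases d') auto
  show ?case
  proof (intro bexI conjI allI impI ballI)
    show "upd \<tau>1 d (delta b) \<in> strat2" using t1(1) distr_delta by (rule upd_strat)
    show "gamma T M p q \<sigma> (upd \<tau>1 d (delta b)) \<le> gamma T M p q \<sigma> \<tau>" by (rule g)
    fix d' assume d': "d' \<notin> insert d S"
    then have "ev \<tau>1 d' = ev \<tau> d'" using t1(2) by blast
    then show "ev (upd \<tau>1 d (delta b)) d' = ev \<tau> d'" using d' evu by simp
  next
    fix d' assume "d' \<in> insert d S" then show "\<exists>b'. ev (upd \<tau>1 d (delta b)) d' = delta b'" using t1(3) evu by auto
  qed
qed

definition Dset :: "nat \<Rightarrow> ('l \<times> 'a list \<times> 'b list) set" where
  "Dset T = {d. length (fst (snd d)) < T \<and> length (snd (snd d)) < T}"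

lemma finite_Dset: "finite (Dset T :: ('l::finite \<times> 'a::finite list \<times> 'b::finite list) set)"
proof -
  have "Dset T \<subseteq> UNIV \<times> {xs. set xs \<subseteq> UNIV \<and> length xs \<le> T} \<times> {xs. set xs \<subseteq> UNIV \<and> length xs \<le> T}"
    unfolding Dset_def by auto
  moreover have "finite (UNIV \<times> {xs::'a list. set xs \<subseteq> UNIV \<and> length xs \<le> T} \<times> {xs::'b list. set xs \<subseteq> UNIV \<and> length xs \<le> T} :: ('l \<times> _) set)"
    by (intro finite_cartesian_product finite_lists_length_le) auto
  ultimately show ?thesis by (rule finite_subset)
qed

definition pstrat :: "nat \<Rightarrow> ('l \<times> 'a list \<times> 'b list \<Rightarrow> 'b) \<Rightarrow> 'l \<Rightarrow> 'a list \<Rightarrow> 'b list \<Rightarrow> 'b \<Rightarrow> real" where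
  "pstrat T g = (\<lambda>l ha hb. if (l, ha, hb) \<in> Dset T then delta (g (l, ha, hb)) else delta undefined)"

definition Pfam :: "nat \<Rightarrow> ('l \<Rightarrow> 'a list \<Rightarrow> 'b list \<Rightarrow> 'b \<Rightarrow> real) set" where
  "Pfam T = pstrat T ` {g. \<forall>x. (x \<in> Dset T \<longrightarrow> g x \<in> UNIV) \<and> (x \<notin> Dset T \<longrightarrow> g x = undefined)}"

lemma Pfam_finite: "finite (Pfam T :: ('l::finite \<Rightarrow> 'a::finite list \<Rightarrow> 'b::finite list \<Rightarrow> 'b \<Rightarrow> real) set)"
  unfolding Pfam_def by (intro finite_imageI finite_set_of_finite_funs finite_Dset) auto

lemma Pfam_strat: "Pfam T \<subseteq> (strat2 :: ('l \<Rightarrow> 'a list \<Rightarrow> 'b::finite list \<Rightarrow> 'b \<Rightarrow> real) set)"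
  unfolding Pfam_def pstrat_def strat2_def using distr_delta by auto

lemma Pfam_ne: "Pfam T \<noteq> {}"
  unfolding Pfam_def by auto

lemma pure_best:
  fixes \<tau> :: "'l::finite \<Rightarrow> 'a::finite list \<Rightarrow> 'b::finite list \<Rightarrow> 'b \<Rightarrow> real"
  assumes "\<tau> \<in> strat2"
  shows "\<exists>\<tau>'\<in>Pfam T. gamma T M p q \<sigma> \<tau>' \<le> gamma T M p q \<sigma> \<tau>"
proof -
  define \<tau>0 where "\<tau>0 = (\<lambda>l ha hb. if (l, ha, hb) \<in> Dset T then \<tau> l ha hb else delta undefined)"
  have t0: "\<tau>0 \<in> strat2" using assms distr_delta unfolding \<tau>0_def strat2_def by auto
  have "cond_payoff T M \<sigma> \<tau>0 k l = cond_payoff T M \<sigma> \<tau> k l" for k l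
    unfolding cond_payoff_def by (rule loc_lt[of T]) (auto simp: \<tau>0_def Dset_def)
  then have g0: "gamma T M p q \<sigma> \<tau>0 = gamma T M p q \<sigma> \<tau>" unfolding gamma_def by simp
  obtain \<tau>' where t': "\<tau>' \<in> strat2" "\<forall>d. d \<notin> Dset T \<longrightarrow> ev \<tau>' d = ev \<tau>0 d"
     "\<forall>d\<in>Dset T. \<exists>b. ev \<tau>' d = delta b" "gamma T M p q \<sigma> \<tau>' \<le> gamma T M p q \<sigma> \<tau>0"
    using purify[OF finite_Dset t0] by blast
  define g where "g = (\<lambda>d. if d \<in> Dset T then SOME b. ev \<tau>' d = delta b else undefined)"
  have gP: "g \<in> {g. \<forall>x. (x \<in> Dset T \<longrightarrow> g x \<in> UNIV) \<and> (x \<notin> Dset T \<longrightarrow> g x = undefined)}" unfolding g_def by simp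
  have eq3: "\<tau>' l ha hb = pstrat T g l ha hb" for l ha hb
    proof (cases "(l, ha, hb) \<in> Dset T")
      case True
      then have "\<exists>b. ev \<tau>' (l, ha, hb) = delta b" using t'(3) by blast
      then have "ev \<tau>' (l, ha, hb) = delta (SOME b. ev \<tau>' (l, ha, hb) = delta b)" by (rule someI_ex)
      then show ?thesis using True unfolding pstrat_def g_def ev_def by simp
    next
      case False
      then show ?thesis using t'(2) unfolding pstrat_def ev_def \<tau>0_def by fastforce
    qed
  have "\<tau>' = pstrat T g" using eq3 by (intro ext) simp
  then have "\<tau>' \<in> Pfam T" using gP unfolding Pfam_def by blast
  then show ?thesis using t'(4) g0 by auto
qed

lemma pf_bound:
  assumes "\<sigma> \<in> strat1" "\<tau> \<in> strat2" "\<And>k l a b. \<bar>M k l a b\<bar> \<le> B"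
  shows "\<bar>payoff_from n M \<sigma> \<tau> k l ha hb\<bar> \<le> real n * B"
proof (induction n arbitrary: ha hb)
  case 0 then show ?case by simp
next
  case (Suc n)
  have s1: "distr (\<sigma> k ha hb)" "distr (\<tau> l ha hb)" using assms by (auto dest: strat1D strat2D)
  have "\<bar>payoff_from (Suc n) M \<sigma> \<tau> k l ha hb\<bar> \<le> (\<Sum>a\<in>UNIV. \<Sum>b\<in>UNIV. \<bar>\<sigma> k ha hb a * \<tau> l ha hb b *
        (M k l a b + payoff_from n M \<sigma> \<tau> k l (ha @ [a]) (hb @ [b]))\<bar>)"
    by simp (rule order_trans[OF sum_abs sum_mono[OF sum_abs]])
  also have "\<dots> \<le> (\<Sum>a\<in>UNIV. \<Sum>b\<in>UNIV. \<sigma> k ha hb a * \<tau> l ha hb b * (B + real n * B))"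
  proof (intro sum_mono)
    fix a b
    have "\<bar>M k l a b + payoff_from n M \<sigma> \<tau> k l (ha @ [a]) (hb @ [b])\<bar> \<le> B + real n * B"
      using assms(3)[of k l a b] Suc.IH[of "ha @ [a]" "hb @ [b]"] by linarith
    then show "\<bar>\<sigma> k ha hb a * \<tau> l ha hb b * (M k l a b + payoff_from n M \<sigma> \<tau> k l (ha @ [a]) (hb @ [b]))\<bar>
        \<le> \<sigma> k ha hb a * \<tau> l ha hb b * (B + real n * B)"
      using s1 by (simp add: abs_mult distrD mult_left_mono)
  qed
  also have "\<dots> = (\<Sum>a\<in>UNIV. \<sigma> k ha hb a * (B + real n * B) * (\<Sum>b\<in>UNIV. \<tau> l ha hb b))"
    by (simp only: sum_distrib_left mult.commute mult.left_commute)
  also have "\<dots> = (\<Sum>a\<in>UNIV. \<sigma> k ha hb a) * (B + real n * B)"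
    using s1 by (simp add: distrD sum_distrib_right[symmetric])
  also have "\<dots> = real (Suc n) * B" using s1 by (simp add: distrD algebra_simps)
  finally show ?case .
qed

lemma avg_bound:
  assumes "distr \<pi>" "\<And>k. \<bar>x k\<bar> \<le> R"
  shows "\<bar>\<Sum>k\<in>UNIV. \<pi> k * x k\<bar> \<le> R"
proof -
  have "\<bar>\<Sum>k\<in>UNIV. \<pi> k * x k\<bar> \<le> (\<Sum>k\<in>UNIV. \<pi> k * R)"
    by (rule order_trans[OF sum_abs sum_mono]) (use assms in \<open>auto simp: abs_mult distrD intro: mult_left_mono\<close>)
  also have "\<dots> = R" using assms by (simp add: sum_distrib_right[symmetric] distrD)
  finally show ?thesis .
qed

lemma strat1_ne: "(strat1 :: ('k \<Rightarrow> 'a list \<Rightarrow> 'b list \<Rightarrow> 'a::finite \<Rightarrow> real) set) \<noteq> {}"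
proof -
  have "(\<lambda>k ha hb. delta undefined) \<in> (strat1 :: ('k \<Rightarrow> 'a list \<Rightarrow> 'b list \<Rightarrow> 'a::finite \<Rightarrow> real) set)"
    unfolding strat1_def by (simp add: distr_delta)
  then show ?thesis by blast
qed

lemma strat2_ne: "(strat2 :: ('l \<Rightarrow> 'a list \<Rightarrow> 'b list \<Rightarrow> 'b::finite \<Rightarrow> real) set) \<noteq> {}"
proof -
  have "(\<lambda>k ha hb. delta undefined) \<in> (strat2 :: ('l \<Rightarrow> 'a list \<Rightarrow> 'b list \<Rightarrow> 'b::finite \<Rightarrow> real) set)"
    unfolding strat2_def by (simp add: distr_delta)
  then show ?thesis by blast
qed

lemma distr_ne: "{\<pi>::'k::finite \<Rightarrow> real. distr \<pi>} \<noteq> {}"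
proof -
  have "distr (delta (undefined::'k))" by (rule distr_delta)
  then show ?thesis by blast
qed

lemma minimax:
  fixes M :: "'k::finite \<Rightarrow> 'l::finite \<Rightarrow> 'a::finite \<Rightarrow> 'b::finite \<Rightarrow> real"
    and \<sigma>s :: "'k \<Rightarrow> 'a list \<Rightarrow> 'b list \<Rightarrow> 'a \<Rightarrow> real"
  assumes "security1 T M p q \<sigma>s"
  shows "\<exists>\<tau>\<in>(strat2 :: ('l \<Rightarrow> 'a list \<Rightarrow> 'b list \<Rightarrow> 'b \<Rightarrow> real) set).
           \<forall>\<sigma>\<in>strat1. gamma T M p q \<sigma> \<tau> \<le> (INF \<tau>\<in>strat2. gamma T M p q \<sigma>s \<tau>)"
proof -
  define V where "V = (INF \<tau>\<in>strat2. gamma T M p q \<sigma>s \<tau>)"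
  let ?P = "Pfam T :: ('l \<Rightarrow> 'a list \<Rightarrow> 'b list \<Rightarrow> 'b \<Rightarrow> real) set"
  define f where "f \<tau> \<sigma> = gamma T M p q \<sigma> \<tau> - V" for \<tau> \<sigma>
  have mix: "\<forall>s\<in>strat1. \<forall>t\<in>strat1. \<forall>c::real. 0 \<le> c \<longrightarrow> c \<le> 1 \<longrightarrow> (\<exists>u\<in>strat1. \<forall>i\<in>?P. f i u = c * f i s + (1-c) * f i t)"
  proof (intro ballI allI impI)
    fix s t :: "'k \<Rightarrow> 'a list \<Rightarrow> 'b list \<Rightarrow> 'a \<Rightarrow> real" and c :: real assume st: "s \<in> strat1" "t \<in> strat1" and c: "0 \<le> c" "c \<le> 1"
    show "\<exists>u\<in>strat1. \<forall>i\<in>?P. f i u = c * f i s + (1-c) * f i t"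
      by (intro bexI[of _ "mix1 c s t"] ballI)
         (auto simp: f_def gamma_mix1[OF st c] mix1_strat[OF st c] algebra_simps)
  qed
  have cov: "\<forall>s\<in>strat1. \<exists>i\<in>?P. f i s \<le> 0"
  proof
    fix \<sigma> :: "'k \<Rightarrow> 'a list \<Rightarrow> 'b list \<Rightarrow> 'a \<Rightarrow> real" assume \<sigma>: "\<sigma> \<in> strat1"
    have "Min ((\<lambda>\<tau>. gamma T M p q \<sigma> \<tau>) ` ?P) \<in> (\<lambda>\<tau>. gamma T M p q \<sigma> \<tau>) ` ?P"
      using Pfam_finite Pfam_ne by (intro Min_in) auto
    then obtain \<tau>0 where t0: "\<tau>0 \<in> ?P" "gamma T M p q \<sigma> \<tau>0 = Min ((\<lambda>\<tau>. gamma T M p q \<sigma> \<tau>) ` ?P)"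
      by (metis (no_types, lifting) imageE)
    have le: "gamma T M p q \<sigma> \<tau>0 \<le> gamma T M p q \<sigma> \<tau>" if tS: "\<tau> \<in> strat2" for \<tau>
    proof -
      obtain \<tau>' where "\<tau>' \<in> ?P" "gamma T M p q \<sigma> \<tau>' \<le> gamma T M p q \<sigma> \<tau>"
        using pure_best[OF tS, of T M p q \<sigma>] by blast
      moreover have "gamma T M p q \<sigma> \<tau>0 \<le> gamma T M p q \<sigma> \<tau>'"
        unfolding t0(2) by (rule Min_le) (use Pfam_finite \<open>\<tau>' \<in> ?P\<close> in auto)
      ultimately show ?thesis by simp
    qed
    have "gamma T M p q \<sigma> \<tau>0 \<le> (INF \<tau>\<in>strat2. gamma T M p q \<sigma> \<tau>)"
      using strat2_ne le by (intro cINF_greatest) auto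
    also have "\<dots> \<le> V" using assms \<sigma> unfolding security1_def V_def by blast
    finally show "\<exists>i\<in>?P. f i \<sigma> \<le> 0" using t0(1) unfolding f_def by auto
  qed
  obtain w where w: "\<forall>i\<in>?P. 0 \<le> w i" "sum w ?P = 1" "\<forall>s\<in>strat1. (\<Sum>i\<in>?P. w i * f i s) \<le> 0"
    using altn[OF Pfam_finite Pfam_ne subset_refl mix cov] by blast
  obtain \<tau>s where ts: "\<tau>s \<in> strat2" "\<And>\<sigma>. gamma T M p q \<sigma> \<tau>s = (\<Sum>i\<in>?P. w i * gamma T M p q \<sigma> i)"
    using mixn2[OF Pfam_finite Pfam_ne Pfam_strat w(1) w(2)] by blast
  show ?thesis
  proof (intro bexI[OF _ ts(1)] ballI)
    fix \<sigma> :: "'k \<Rightarrow> 'a list \<Rightarrow> 'b list \<Rightarrow> 'a \<Rightarrow> real" assume "\<sigma> \<in> strat1"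
    then have "(\<Sum>i\<in>?P. w i * f i \<sigma>) \<le> 0" using w(3) by blast
    moreover have "(\<Sum>i\<in>?P. w i * f i \<sigma>) = gamma T M p q \<sigma> \<tau>s - V"
      unfolding f_def ts(2) using w(2) by (simp add: right_diff_distrib sum_subtractf sum_distrib_right[symmetric])
    ultimately show "gamma T M p q \<sigma> \<tau>s \<le> (INF \<tau>\<in>strat2. gamma T M p q \<sigma>s \<tau>)" unfolding V_def by simp
  qed
qed

lemma pf_sigma_local: "\<sigma> k = \<sigma>' k \<Longrightarrow> payoff_from n M \<sigma> \<tau> k l ha hb = payoff_from n M \<sigma>' \<tau> k l ha hb"
  by (induction n arbitrary: ha hb) auto

lemma pf_tau_local: "\<tau> l = \<tau>' l \<Longrightarrow> payoff_from n M \<sigma> \<tau> k l ha hb = payoff_from n M \<sigma> \<tau>' k l ha hb"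
  by (induction n arbitrary: ha hb) auto

lemma bdd_below_abs: "(\<And>x. x \<in> A \<Longrightarrow> \<bar>f x\<bar> \<le> (R::real)) \<Longrightarrow> bdd_below (f ` A)"
proof (rule bdd_belowI2)
  fix x assume "\<And>x. x \<in> A \<Longrightarrow> \<bar>f x\<bar> \<le> R" "x \<in> A"
  then have "\<bar>f x\<bar> \<le> R" by blast
  then show "-R \<le> f x" by arith
qed

lemma bdd_above_abs: "(\<And>x. x \<in> A \<Longrightarrow> \<bar>f x\<bar> \<le> (R::real)) \<Longrightarrow> bdd_above (f ` A)"
proof (rule bdd_aboveI2)
  fix x assume "\<And>x. x \<in> A \<Longrightarrow> \<bar>f x\<bar> \<le> R" "x \<in> A"
  then have "\<bar>f x\<bar> \<le> R" by blast
  then show "f x \<le> R" by arith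
qed

lemma inf_bound: "A \<noteq> {} \<Longrightarrow> (\<And>x. x \<in> A \<Longrightarrow> \<bar>f x\<bar> \<le> (R::real)) \<Longrightarrow> \<bar>INF x\<in>A. f x\<bar> \<le> R"
proof -
  assume A: "A \<noteq> {}" and b: "\<And>x. x \<in> A \<Longrightarrow> \<bar>f x\<bar> \<le> R"
  obtain x where x: "x \<in> A" using A by auto
  have bdd: "bdd_below (f ` A)" using b by (rule bdd_below_abs)
  have "(INF x\<in>A. f x) \<le> R" using cINF_lower[OF bdd x] b[OF x] by simp
  moreover have "-R \<le> (INF x\<in>A. f x)" using A b by (intro cINF_greatest) (force simp: abs_le_iff)+
  ultimately show ?thesis by simp
qed

lemma sup_bound: "A \<noteq> {} \<Longrightarrow> (\<And>x. x \<in> A \<Longrightarrow> \<bar>f x\<bar> \<le> (R::real)) \<Longrightarrow> \<bar>SUP x\<in>A. f x\<bar> \<le> R"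
proof -
  assume A: "A \<noteq> {}" and b: "\<And>x. x \<in> A \<Longrightarrow> \<bar>f x\<bar> \<le> R"
  obtain x where x: "x \<in> A" using A by auto
  have bdd: "bdd_above (f ` A)" using b by (rule bdd_above_abs)
  have "-R \<le> (SUP x\<in>A. f x)" using cSUP_upper[OF x bdd] b[OF x] by simp
  moreover have "(SUP x\<in>A. f x) \<le> R" using A b by (intro cSUP_least) (force simp: abs_le_iff)+
  ultimately show ?thesis by simp
qed

lemma gamma_k: "gamma T M p q \<sigma> \<tau> = (\<Sum>k\<in>UNIV. p k * (\<Sum>l\<in>UNIV. q l * cond_payoff T M \<sigma> \<tau> k l))"
  unfolding gamma_def by (simp add: sum_distrib_left mult.assoc)

lemma gamma_l: "gamma T M p q \<sigma> \<tau> = (\<Sum>l\<in>UNIV. q l * (\<Sum>k\<in>UNIV. p k * cond_payoff T M \<sigma> \<tau> k l))"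
  unfolding gamma_def by (subst sum.swap) (simp add: sum_distrib_left mult.assoc mult.left_commute)

theorem lemma2:
  fixes M :: "'k::finite \<Rightarrow> 'l::finite \<Rightarrow> 'a::finite \<Rightarrow> 'b::finite \<Rightarrow> real"
    and p :: "'k \<Rightarrow> real" and q :: "'l \<Rightarrow> real" and T :: nat
    and \<sigma>s :: "'k \<Rightarrow> 'a list \<Rightarrow> 'b list \<Rightarrow> 'a \<Rightarrow> real"
    and \<tau>s :: "'l \<Rightarrow> 'a list \<Rightarrow> 'b list \<Rightarrow> 'b \<Rightarrow> real"
  assumes "distr p" and "\<forall>k. 0 < p k"
    and "distr q" and "\<forall>l. 0 < q l"
    and "security1 T M p q \<sigma>s"
    and "security2 T M p q \<tau>s"
  shows "(\<forall>\<mu>. dual1_value T M (\<lambda>k. - w0 T M q \<tau>s k) q - (\<Sum>k\<in>UNIV. p k * (- w0 T M q \<tau>s k))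
              \<le> dual1_value T M \<mu> q - (\<Sum>k\<in>UNIV. p k * \<mu> k))
       \<and> (\<forall>\<nu>. dual2_value T M p \<nu> - (\<Sum>l\<in>UNIV. q l * \<nu> l)
              \<le> dual2_value T M p (\<lambda>l. - u0 T M p \<sigma>s l) - (\<Sum>l\<in>UNIV. q l * (- u0 T M p \<sigma>s l)))"
proof -
  note dp = assms(1) and dq = assms(3)
  have s1: "\<sigma>s \<in> strat1" using assms(5) unfolding security1_def by blast
  have t2: "\<tau>s \<in> strat2" using assms(6) unfolding security2_def by blast
  define B where "B = (\<Sum>x\<in>UNIV. \<bar>case x of (k, l, a, b) \<Rightarrow> M k l a b\<bar>)"
  have MB: "\<bar>M k l a b\<bar> \<le> B" for k l a b
  proof -
    have "\<bar>case (k, l, a, b) of (k, l, a, b) \<Rightarrow> M k l a b\<bar> \<le> B"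
      unfolding B_def by (rule member_le_sum) auto
    then show ?thesis by simp
  qed
  define C where "C = real T * B"
  have cb: "\<bar>cond_payoff T M \<sigma> \<tau> k l\<bar> \<le> C" if "\<sigma> \<in> strat1" "\<tau> \<in> strat2" for \<sigma> \<tau> k l
    unfolding cond_payoff_def C_def by (rule pf_bound[OF that MB])
  have hb: "\<bar>\<Sum>l\<in>UNIV. q l * cond_payoff T M \<sigma> \<tau> k l\<bar> \<le> C" if "\<sigma> \<in> strat1" "\<tau> \<in> strat2" for \<sigma> \<tau> k
    by (rule avg_bound[OF dq cb[OF that]])
  have gb: "\<bar>\<Sum>k\<in>UNIV. p k * cond_payoff T M \<sigma> \<tau> k l\<bar> \<le> C" if "\<sigma> \<in> strat1" "\<tau> \<in> strat2" for \<sigma> \<tau> l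
    by (rule avg_bound[OF dp cb[OF that]])
  have gamb: "\<bar>gamma T M p q \<sigma> \<tau>\<bar> \<le> C" if "\<sigma> \<in> strat1" "\<tau> \<in> strat2" for \<sigma> \<tau>
    unfolding gamma_k by (rule avg_bound[OF dp hb[OF that]])
  define V where "V = (INF \<tau>\<in>strat2. gamma T M p q \<sigma>s \<tau>)"
  define Vup where "Vup = (SUP \<sigma>\<in>strat1. gamma T M p q \<sigma> \<tau>s)"
  have F2: "V \<le> gamma T M p q \<sigma>s \<tau>" if "\<tau> \<in> strat2" for \<tau>
    unfolding V_def by (rule cINF_lower[OF bdd_below_abs that]) (rule gamb[OF s1])
  have F3: "gamma T M p q \<sigma> \<tau>s \<le> Vup" if "\<sigma> \<in> strat1" for \<sigma>
    unfolding Vup_def by (rule cSUP_upper[OF that bdd_above_abs]) (rule gamb[OF _ t2])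
  obtain \<tau>x where tx: "\<tau>x \<in> strat2" "\<forall>\<sigma>\<in>strat1. gamma T M p q \<sigma> \<tau>x \<le> V"
    using minimax[OF assms(5)] unfolding V_def by blast
  have F1: "Vup \<le> V"
  proof -
    have "Vup \<le> (SUP \<sigma>\<in>strat1. gamma T M p q \<sigma> \<tau>x)"
      using assms(6) tx(1) unfolding security2_def Vup_def by blast
    also have "\<dots> \<le> V" using strat1_ne tx(2) by (intro cSUP_least) auto
    finally show ?thesis .
  qed

  define w where "w = w0 T M q \<tau>s"
  define h where "h k \<sigma> = (\<Sum>l\<in>UNIV. q l * cond_payoff T M \<sigma> \<tau>s k l)" for k \<sigma>
  have hbd: "\<bar>h k \<sigma>\<bar> \<le> C" if "\<sigma> \<in> strat1" for k \<sigma> unfolding h_def by (rule hb[OF that t2])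
  have wdef: "w k = (SUP \<sigma>\<in>strat1. h k \<sigma>)" for k unfolding w_def w0_def h_def ..
  have hw: "h k \<sigma> \<le> w k" if "\<sigma> \<in> strat1" for k \<sigma>
    unfolding wdef by (rule cSUP_upper[OF that bdd_above_abs]) (rule hbd)
  have wb: "\<bar>w k\<bar> \<le> C" for k unfolding wdef by (rule sup_bound[OF strat1_ne hbd])
  have D1: "dual1_value T M (\<lambda>k. - w k) q \<le> 0"
    unfolding dual1_value_def
  proof (rule cSUP_least)
    show "{\<pi>. distr \<pi>} \<times> strat1 \<noteq> {}" using distr_ne strat1_ne by auto
  next
    fix x :: "('k \<Rightarrow> real) \<times> ('k \<Rightarrow> 'a list \<Rightarrow> 'b list \<Rightarrow> 'a \<Rightarrow> real)"
    assume "x \<in> {\<pi>::'k \<Rightarrow> real. distr \<pi>} \<times> strat1"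
    then obtain \<pi> \<sigma> where x: "x = (\<pi>, \<sigma>)" "distr \<pi>" "\<sigma> \<in> strat1" by auto
    define G where "G \<tau> = (\<Sum>k\<in>UNIV. \<pi> k * (- w k + (\<Sum>l\<in>UNIV. q l * cond_payoff T M \<sigma> \<tau> k l)))" for \<tau>
    have Gb: "\<bar>G \<tau>\<bar> \<le> C + C" if "\<tau> \<in> strat2" for \<tau>
      unfolding G_def
    proof (rule avg_bound[OF x(2)])
      fix k
      show "\<bar>- w k + (\<Sum>l\<in>UNIV. q l * cond_payoff T M \<sigma> \<tau> k l)\<bar> \<le> C + C"
        using wb[of k] hb[OF x(3) that, of k] by arith
    qed
    have "(INF \<tau>\<in>strat2. G \<tau>) \<le> G \<tau>s" by (rule cINF_lower[OF bdd_below_abs t2]) (rule Gb)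
    also have "\<dots> \<le> 0" unfolding G_def
    proof (rule sum_nonpos)
      fix k
      have "- w k + (\<Sum>l\<in>UNIV. q l * cond_payoff T M \<sigma> \<tau>s k l) \<le> 0" using hw[OF x(3), of k] unfolding h_def by simp
      then show "\<pi> k * (- w k + (\<Sum>l\<in>UNIV. q l * cond_payoff T M \<sigma> \<tau>s k l)) \<le> 0"
        using x(2) by (intro mult_nonneg_nonpos) (auto simp: distrD)
    qed
    finally show "(case x of (\<pi>, \<sigma>) \<Rightarrow> INF \<tau>\<in>strat2. \<Sum>k\<in>UNIV. \<pi> k * (- w k + (\<Sum>l\<in>UNIV. q l * cond_payoff T M \<sigma> \<tau> k l))) \<le> 0"
      unfolding x(1) G_def by simp
  qed
  have D2: "(\<Sum>k\<in>UNIV. p k * w k) \<le> Vup"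
  proof (rule field_le_epsilon)
    fix e :: real assume e: "0 < e"
    have "\<forall>k. \<exists>\<sigma>\<in>strat1. w k - e < h k \<sigma>"
    proof
      fix k
      have "w k - e < (SUP \<sigma>\<in>strat1. h k \<sigma>)" using e unfolding wdef[symmetric] by simp
      then show "\<exists>\<sigma>\<in>strat1. w k - e < h k \<sigma>"
        using less_cSUP_iff[OF strat1_ne bdd_above_abs[of strat1 "h k" C, OF hbd]] by blast
    qed
    then obtain sel where sel: "\<And>k. sel k \<in> strat1" "\<And>k. w k - e < h k (sel k)" by metis
    define \<sigma>' where "\<sigma>' = (\<lambda>k. sel k k)"
    have s': "\<sigma>' \<in> strat1" using sel(1) unfolding \<sigma>'_def strat1_def by auto
    have hs: "h k \<sigma>' = h k (sel k)" for k
    proof -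
      have "payoff_from n M \<sigma>' \<tau>s k l ha hb = payoff_from n M (sel k) \<tau>s k l ha hb" for n l ha hb
        by (rule pf_sigma_local) (simp add: \<sigma>'_def)
      then show ?thesis unfolding h_def cond_payoff_def by simp
    qed
    have "(\<Sum>k\<in>UNIV. p k * w k) - e = (\<Sum>k\<in>UNIV. p k * (w k - e))"
      using dp by (simp add: right_diff_distrib sum_subtractf sum_distrib_right[symmetric] distrD)
    also have "\<dots> \<le> (\<Sum>k\<in>UNIV. p k * h k \<sigma>')"
      using sel(2) dp by (intro sum_mono mult_left_mono) (auto simp: hs distrD less_imp_le)
    also have "\<dots> = gamma T M p q \<sigma>' \<tau>s" unfolding gamma_k h_def ..
    also have "\<dots> \<le> Vup" by (rule F3[OF s'])
    finally show "(\<Sum>k\<in>UNIV. p k * w k) \<le> Vup + e" by simp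
  qed
  have D3: "V + (\<Sum>k\<in>UNIV. p k * \<mu> k) \<le> dual1_value T M \<mu> q" for \<mu>
  proof -
    define G where "G \<pi> \<sigma> \<tau> = (\<Sum>k\<in>UNIV. \<pi> k * (\<mu> k + (\<Sum>l\<in>UNIV. q l * cond_payoff T M \<sigma> \<tau> k l)))" for \<pi> \<sigma> \<tau>
    define R where "R = (\<Sum>k\<in>UNIV. \<bar>\<mu> k\<bar>) + C"
    have Gb: "\<bar>G \<pi> \<sigma> \<tau>\<bar> \<le> R" if "distr \<pi>" "\<sigma> \<in> strat1" "\<tau> \<in> strat2" for \<pi> \<sigma> \<tau>
      unfolding G_def
    proof (rule avg_bound[OF that(1)])
      fix k
      have "\<bar>\<mu> k\<bar> \<le> (\<Sum>k\<in>UNIV. \<bar>\<mu> k\<bar>)" by (rule member_le_sum) auto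
      then show "\<bar>\<mu> k + (\<Sum>l\<in>UNIV. q l * cond_payoff T M \<sigma> \<tau> k l)\<bar> \<le> R"
        using hb[OF that(2,3), of k] unfolding R_def by arith
    qed
    have Ib: "\<bar>(case x of (\<pi>, \<sigma>) \<Rightarrow> INF \<tau>\<in>strat2. G \<pi> \<sigma> \<tau>)\<bar> \<le> R" if "x \<in> {\<pi>. distr \<pi>} \<times> strat1" for x :: "('k \<Rightarrow> real) \<times> ('k \<Rightarrow> 'a list \<Rightarrow> 'b list \<Rightarrow> 'a \<Rightarrow> real)"
      using that by (auto intro!: inf_bound[OF strat2_ne] Gb)
    have "V + (\<Sum>k\<in>UNIV. p k * \<mu> k) \<le> (INF \<tau>\<in>strat2. G p \<sigma>s \<tau>)"
    proof (rule cINF_greatest[OF strat2_ne])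
      fix \<tau> :: "'l \<Rightarrow> 'a list \<Rightarrow> 'b list \<Rightarrow> 'b \<Rightarrow> real" assume t: "\<tau> \<in> strat2"
      have "G p \<sigma>s \<tau> = (\<Sum>k\<in>UNIV. p k * \<mu> k) + gamma T M p q \<sigma>s \<tau>"
        unfolding G_def gamma_k by (simp add: distrib_left sum.distrib)
      then show "V + (\<Sum>k\<in>UNIV. p k * \<mu> k) \<le> G p \<sigma>s \<tau>" using F2[OF t] by simp
    qed
    also have "\<dots> = (case (p, \<sigma>s) of (\<pi>, \<sigma>) \<Rightarrow> INF \<tau>\<in>strat2. G \<pi> \<sigma> \<tau>)" by simp
    also have "\<dots> \<le> (SUP x\<in>{\<pi>. distr \<pi>} \<times> strat1. (case x of (\<pi>, \<sigma>) \<Rightarrow> INF \<tau>\<in>strat2. G \<pi> \<sigma> \<tau>))"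
      by (rule cSUP_upper[OF _ bdd_above_abs[OF Ib]]) (use dp s1 in auto)
    also have "\<dots> = dual1_value T M \<mu> q" unfolding dual1_value_def G_def ..
    finally show ?thesis .
  qed
  have P1: "\<forall>\<mu>. dual1_value T M (\<lambda>k. - w0 T M q \<tau>s k) q - (\<Sum>k\<in>UNIV. p k * (- w0 T M q \<tau>s k))
              \<le> dual1_value T M \<mu> q - (\<Sum>k\<in>UNIV. p k * \<mu> k)"
  proof
    fix \<mu>
    have "dual1_value T M (\<lambda>k. - w k) q - (\<Sum>k\<in>UNIV. p k * (- w k)) \<le> (\<Sum>k\<in>UNIV. p k * w k)"
      using D1 by (simp add: sum_negf)
    also have "\<dots> \<le> dual1_value T M \<mu> q - (\<Sum>k\<in>UNIV. p k * \<mu> k)" using D2 F1 D3[of \<mu>] by simp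
    finally show "dual1_value T M (\<lambda>k. - w0 T M q \<tau>s k) q - (\<Sum>k\<in>UNIV. p k * (- w0 T M q \<tau>s k))
              \<le> dual1_value T M \<mu> q - (\<Sum>k\<in>UNIV. p k * \<mu> k)" unfolding w_def .
  qed

  define u where "u = u0 T M p \<sigma>s"
  define g where "g l \<tau> = (\<Sum>k\<in>UNIV. p k * cond_payoff T M \<sigma>s \<tau> k l)" for l \<tau>
  have gbd: "\<bar>g l \<tau>\<bar> \<le> C" if "\<tau> \<in> strat2" for l \<tau> unfolding g_def by (rule gb[OF s1 that])
  have udef: "u l = (INF \<tau>\<in>strat2. g l \<tau>)" for l unfolding u_def u0_def g_def ..
  have ug: "u l \<le> g l \<tau>" if "\<tau> \<in> strat2" for l \<tau>
    unfolding udef by (rule cINF_lower[OF bdd_below_abs that]) (rule gbd)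
  have ub: "\<bar>u l\<bar> \<le> C" for l unfolding udef by (rule inf_bound[OF strat2_ne gbd])
  define G where "G \<nu> \<sigma> \<rho> \<tau> = (\<Sum>l\<in>UNIV. \<rho> l * (\<nu> l + (\<Sum>k\<in>UNIV. p k * cond_payoff T M \<sigma> \<tau> k l)))" for \<nu> \<sigma> \<rho> \<tau>
  have Gb: "\<bar>G \<nu> \<sigma> \<rho> \<tau>\<bar> \<le> (\<Sum>l\<in>UNIV. \<bar>\<nu> l\<bar>) + C" if "distr \<rho>" "\<sigma> \<in> strat1" "\<tau> \<in> strat2" for \<nu> \<sigma> \<rho> \<tau>
    unfolding G_def
  proof (rule avg_bound[OF that(1)])
    fix l
    have "\<bar>\<nu> l\<bar> \<le> (\<Sum>l\<in>UNIV. \<bar>\<nu> l\<bar>)" by (rule member_le_sum) auto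
    then show "\<bar>\<nu> l + (\<Sum>k\<in>UNIV. p k * cond_payoff T M \<sigma> \<tau> k l)\<bar> \<le> (\<Sum>l\<in>UNIV. \<bar>\<nu> l\<bar>) + C"
      using gb[OF that(2,3), of l] by arith
  qed
  have Gb2: "\<bar>(case x of (\<rho>, \<tau>) \<Rightarrow> G \<nu> \<sigma> \<rho> \<tau>)\<bar> \<le> (\<Sum>l\<in>UNIV. \<bar>\<nu> l\<bar>) + C"
    if "x \<in> {\<rho>. distr \<rho>} \<times> strat2" "\<sigma> \<in> strat1"
    for \<nu> \<sigma> and x :: "('l \<Rightarrow> real) \<times> ('l \<Rightarrow> 'a list \<Rightarrow> 'b list \<Rightarrow> 'b \<Rightarrow> real)"
    using that by (auto intro!: Gb)
  have pne: "{\<rho>::'l \<Rightarrow> real. distr \<rho>} \<times> (strat2 :: ('l \<Rightarrow> 'a list \<Rightarrow> 'b list \<Rightarrow> 'b \<Rightarrow> real) set) \<noteq> {}"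
    using distr_ne strat2_ne by auto
  have dual2G: "dual2_value T M p \<nu> = (SUP \<sigma>\<in>strat1. INF x\<in>{\<rho>. distr \<rho>} \<times> strat2. (case x of (\<rho>, \<tau>) \<Rightarrow> G \<nu> \<sigma> \<rho> \<tau>))" for \<nu>
    unfolding dual2_value_def G_def ..
  have E1: "dual2_value T M p \<nu> \<le> (\<Sum>l\<in>UNIV. q l * \<nu> l) + Vup" for \<nu>
    unfolding dual2G
  proof (rule cSUP_least[OF strat1_ne])
    fix \<sigma> :: "'k \<Rightarrow> 'a list \<Rightarrow> 'b list \<Rightarrow> 'a \<Rightarrow> real" assume \<sigma>: "\<sigma> \<in> strat1"
    have "(INF x\<in>{\<rho>. distr \<rho>} \<times> strat2. (case x of (\<rho>, \<tau>) \<Rightarrow> G \<nu> \<sigma> \<rho> \<tau>)) \<le> (case (q, \<tau>s) of (\<rho>, \<tau>) \<Rightarrow> G \<nu> \<sigma> \<rho> \<tau>)"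
      by (rule cINF_lower[OF bdd_below_abs]) (use Gb2[OF _ \<sigma>] dq t2 in auto)
    also have "\<dots> = (\<Sum>l\<in>UNIV. q l * \<nu> l) + gamma T M p q \<sigma> \<tau>s"
      unfolding G_def gamma_l by (simp add: distrib_left sum.distrib)
    also have "\<dots> \<le> (\<Sum>l\<in>UNIV. q l * \<nu> l) + Vup" using F3[OF \<sigma>] by simp
    finally show "(INF x\<in>{\<rho>. distr \<rho>} \<times> strat2. (case x of (\<rho>, \<tau>) \<Rightarrow> G \<nu> \<sigma> \<rho> \<tau>)) \<le> (\<Sum>l\<in>UNIV. q l * \<nu> l) + Vup" .
  qed
  have E2: "0 \<le> dual2_value T M p (\<lambda>l. - u l)"
    unfolding dual2G
  proof -
    have "0 \<le> (INF x\<in>{\<rho>. distr \<rho>} \<times> strat2. (case x of (\<rho>, \<tau>) \<Rightarrow> G (\<lambda>l. - u l) \<sigma>s \<rho> \<tau>))"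
    proof (rule cINF_greatest[OF pne])
      fix x :: "('l \<Rightarrow> real) \<times> ('l \<Rightarrow> 'a list \<Rightarrow> 'b list \<Rightarrow> 'b \<Rightarrow> real)"
      assume "x \<in> {\<rho>. distr \<rho>} \<times> strat2"
      then obtain \<rho> \<tau> where x: "x = (\<rho>, \<tau>)" "distr \<rho>" "\<tau> \<in> strat2" by auto
      have "0 \<le> G (\<lambda>l. - u l) \<sigma>s \<rho> \<tau>" unfolding G_def
      proof (rule sum_nonneg)
        fix l
        have "0 \<le> - u l + (\<Sum>k\<in>UNIV. p k * cond_payoff T M \<sigma>s \<tau> k l)" using ug[OF x(3), of l] unfolding g_def by simp
        then show "0 \<le> \<rho> l * (- u l + (\<Sum>k\<in>UNIV. p k * cond_payoff T M \<sigma>s \<tau> k l))"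
          using x(2) by (intro mult_nonneg_nonneg) (auto simp: distrD)
      qed
      then show "0 \<le> (case x of (\<rho>, \<tau>) \<Rightarrow> G (\<lambda>l. - u l) \<sigma>s \<rho> \<tau>)" unfolding x(1) by simp
    qed
    also have "\<dots> \<le> (SUP \<sigma>\<in>strat1. INF x\<in>{\<rho>. distr \<rho>} \<times> strat2. (case x of (\<rho>, \<tau>) \<Rightarrow> G (\<lambda>l. - u l) \<sigma> \<rho> \<tau>))"
    proof (rule cSUP_upper[OF s1 bdd_above_abs])
      fix \<sigma> :: "'k \<Rightarrow> 'a list \<Rightarrow> 'b list \<Rightarrow> 'a \<Rightarrow> real" assume \<sigma>: "\<sigma> \<in> strat1"
      show "\<bar>INF x\<in>{\<rho>. distr \<rho>} \<times> strat2. (case x of (\<rho>, \<tau>) \<Rightarrow> G (\<lambda>l. - u l) \<sigma> \<rho> \<tau>)\<bar> \<le> (\<Sum>l\<in>UNIV. \<bar>- u l\<bar>) + C"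
        by (rule inf_bound[OF pne Gb2[OF _ \<sigma>]])
    qed
    finally show "0 \<le> (SUP \<sigma>\<in>strat1. INF x\<in>{\<rho>. distr \<rho>} \<times> strat2. (case x of (\<rho>, \<tau>) \<Rightarrow> G (\<lambda>l. - u l) \<sigma> \<rho> \<tau>))" .
  qed
  have E3: "V \<le> (\<Sum>l\<in>UNIV. q l * u l)"
  proof (rule field_le_epsilon)
    fix e :: real assume e: "0 < e"
    have "\<forall>l. \<exists>\<tau>\<in>strat2. g l \<tau> < u l + e"
    proof
      fix l
      have "(INF \<tau>\<in>strat2. g l \<tau>) < u l + e" using e unfolding udef[symmetric] by simp
      then show "\<exists>\<tau>\<in>strat2. g l \<tau> < u l + e"
        using cINF_less_iff[OF strat2_ne bdd_below_abs[of strat2 "g l" C, OF gbd]] by blast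
    qed
    then obtain sel where sel: "\<And>l. sel l \<in> strat2" "\<And>l. g l (sel l) < u l + e" by metis
    define \<tau>' where "\<tau>' = (\<lambda>l. sel l l)"
    have t': "\<tau>' \<in> strat2" using sel(1) unfolding \<tau>'_def strat2_def by auto
    have gs: "g l \<tau>' = g l (sel l)" for l
    proof -
      have "payoff_from n M \<sigma>s \<tau>' k l ha hb = payoff_from n M \<sigma>s (sel l) k l ha hb" for n k ha hb
        by (rule pf_tau_local) (simp add: \<tau>'_def)
      then show ?thesis unfolding g_def cond_payoff_def by simp
    qed
    have "V \<le> gamma T M p q \<sigma>s \<tau>'" by (rule F2[OF t'])
    also have "\<dots> = (\<Sum>l\<in>UNIV. q l * g l \<tau>')" unfolding gamma_l g_def ..
    also have "\<dots> \<le> (\<Sum>l\<in>UNIV. q l * (u l + e))"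
      using sel(2) dq by (intro sum_mono mult_left_mono) (auto simp: gs distrD less_imp_le)
    also have "\<dots> = (\<Sum>l\<in>UNIV. q l * u l) + e"
      using dq by (simp add: distrib_left sum.distrib sum_distrib_right[symmetric] distrD)
    finally show "V \<le> (\<Sum>l\<in>UNIV. q l * u l) + e" .
  qed
  have P2: "\<forall>\<nu>. dual2_value T M p \<nu> - (\<Sum>l\<in>UNIV. q l * \<nu> l)
              \<le> dual2_value T M p (\<lambda>l. - u0 T M p \<sigma>s l) - (\<Sum>l\<in>UNIV. q l * (- u0 T M p \<sigma>s l))"
  proof
    fix \<nu>
    have "dual2_value T M p \<nu> - (\<Sum>l\<in>UNIV. q l * \<nu> l) \<le> (\<Sum>l\<in>UNIV. q l * u l)"
      using E1[of \<nu>] F1 E3 by simp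
    also have "\<dots> \<le> dual2_value T M p (\<lambda>l. - u l) - (\<Sum>l\<in>UNIV. q l * (- u l))"
      using E2 by (simp add: sum_negf)
    finally show "dual2_value T M p \<nu> - (\<Sum>l\<in>UNIV. q l * \<nu> l)
              \<le> dual2_value T M p (\<lambda>l. - u0 T M p \<sigma>s l) - (\<Sum>l\<in>UNIV. q l * (- u0 T M p \<sigma>s l))"
      unfolding u_def .
  qed
  show ?thesis using P1 P2 by blast
qed

end
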